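(* Let $(q_n),(r_n)$ be complex sequences vanishing faster than any negative power of $|n|$ as $n\to\pm\infty$ with $1-q_nr_n\neq0$ and $1+q_nr_{n+1}\ne0$ for all $n$, and let $u_n,v_n,p_n,s_n$ be as in the context. Then the (meromorphically extended) transmission coefficients $T^{(q,r)}$, $T_{\rm l}^{(u,v)}$, $T_{\rm r}^{(u,v)}$, $T_{\rm l}^{(p,s)}$, $T_{\rm r}^{(p,s)}$ have the same poles in $0<|z|<1$, each pole having the same multiplicity for all five functions. Similarly $\bar T^{(q,r)}$, $\bar T_{\rm l}^{(u,v)}$, $\bar T_{\rm r}^{(u,v)}$, $\bar T_{\rm l}^{(p,s)}$, $\bar T_{\rm r}^{(p,s)}$ have the same poles in $|z|>1$ with the same multiplicities.
   Context: System (Q): $\begin{bmatrix}\alpha_n\\ \beta_n\end{bmatrix}=\begin{bmatrix} z & (z-z^{-1})q_n\\ z r_n & z^{-1}+(z-z^{-1})q_nr_n\end{bmatrix}\begin{bmatrix}\alpha_{n+1}\\ \beta_{n+1}\end{bmatrix}$; system (U) with potentials $(a,b)$: $\begin{bmatrix}\xi_n\\ \eta_n\end{bmatrix}=\begin{bmatrix} z & z a_n\\ z^{-1}b_n & z^{-1}\end{bmatrix}\begin{bmatrix}\xi_{n+1}\\ \eta_{n+1}\end{bmatrix}$. With $D_n=\prod_{j\le n}(1-q_jr_j)$, $E_n=\prod_{j\le n}(1+q_jr_{j+1})$: $u_n=q_nE_{n-1}/D_n$, $v_n=(-r_n+r_{n+1}-q_nr_nr_{n+1})D_{n-1}/E_n$,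 $p_n=(q_n-q_{n+1}-q_nq_{n+1}r_{n+1})E_{n-1}/D_{n+1}$, $s_n=r_{n+1}D_n/E_n$. For $|z|=1$ the Jost solutions $\psi_n$, $\phi_n$, $\bar\phi_n$, $\bar\psi_n$ of each system satisfy $\psi_n=\begin{bmatrix}o(1)\\ z^n[1+o(1)]\end{bmatrix}$ as $n\to+\infty$, $\bar\psi_n=\begin{bmatrix}z^{-n}[1+o(1)]\\ o(1)\end{bmatrix}$ as $n\to+\infty$, $\phi_n=\begin{bmatrix}z^{-n}[1+o(1)]\\ o(1)\end{bmatrix}$ as $n\to-\infty$, $\bar\phi_n=\begin{bmatrix}o(1)\\ z^{n}[1+o(1)]\end{bmatrix}$ as $n\to-\infty$ (overbars are not complex conjugation). Transmission coefficients: second component of $\psi_n$ $=(1/T_{\rm l})z^n[1+o(1)]$ and first component of $\bar\psi_n$ $=(1/\bar T_{\rm l})z^{-n}[1+o(1)]$ as $n\to-\infty$; first component of $\phi_n$ $=(1/T_{\rm r})z^{-n}[1+o(1)]$ and second component of $\bar\phi_n$ $=(1/\bar T_{\rm r})z^{n}[1+o(1)]$ as $n\to+\infty$; for (Q), $T_{\rm l}=T_{\rm r}=:T^{(q,r)}$ and $\bar T_{\rm l}=\bar T_{\rm r}=:\bar T^{(q,r)}$. The unbarred transmission coefficients extend meromorphically to $|z|<1$ and the barred ones to $|z|>1$. *)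

theory Defs
  imports "HOL-Complex_Analysis.Complex_Analysis"
begin

text \<open>A discrete first-order 2x2 system  X_n = M(z,n) X_{n+1}, where the
coefficient matrix [[a,b],[c,d]] is stored as the tuple (a,b,c,d).\<close>

type_synonym system = "complex \<Rightarrow> int \<Rightarrow> complex \<times> complex \<times> complex \<times> complex"

definition is_sol :: "system \<Rightarrow> complex \<Rightarrow> (int \<Rightarrow> complex \<times> complex) \<Rightarrow> bool" where
  "is_sol M z X \<longleftrightarrow> (\<forall>n. case M z n of (a, b, c, d) \<Rightarrow>
      fst (X n) = a * fst (X (n+1)) + b * snd (X (n+1)) \<and>
      snd (X n) = c * fst (X (n+1)) + d * snd (X (n+1)))"

definition sysQ :: "(int \<Rightarrow> complex) \<Rightarrow> (int \<Rightarrow> complex) \<Rightarrow> system" where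
  "sysQ q r = (\<lambda>z n. (z, (z - inverse z) * q n, z * r n, inverse z + (z - inverse z) * q n * r n))"

definition sysU :: "(int \<Rightarrow> complex) \<Rightarrow> (int \<Rightarrow> complex) \<Rightarrow> system" where
  "sysU a b = (\<lambda>z n. (z, z * a n, inverse z * b n, inverse z))"

text \<open>For |z| = 1 these are exactly the normalisations of the
paper; the same normalisation (z^{-n} psi_n -> (0,1) as n -> +oo, etc.) defines the
analytic continuation of psi, phi into |z| < 1 and of psibar, phibar into |z| > 1.\<close>

definition jost_psi :: "system \<Rightarrow> complex \<Rightarrow> int \<Rightarrow> complex \<times> complex" where
  "jost_psi M z = (THE X. is_sol M z X \<and>
      ((\<lambda>n. z powi (-n) * fst (X n)) \<longlongrightarrow> 0) at_top \<and>
      ((\<lambda>n. z powi (-n) * snd (X n)) \<longlongrightarrow> 1) at_top)"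

definition jost_psibar :: "system \<Rightarrow> complex \<Rightarrow> int \<Rightarrow> complex \<times> complex" where
  "jost_psibar M z = (THE X. is_sol M z X \<and>
      ((\<lambda>n. z powi n * fst (X n)) \<longlongrightarrow> 1) at_top \<and>
      ((\<lambda>n. z powi n * snd (X n)) \<longlongrightarrow> 0) at_top)"

definition jost_phi :: "system \<Rightarrow> complex \<Rightarrow> int \<Rightarrow> complex \<times> complex" where
  "jost_phi M z = (THE X. is_sol M z X \<and>
      ((\<lambda>n. z powi n * fst (X n)) \<longlongrightarrow> 1) at_bot \<and>
      ((\<lambda>n. z powi n * snd (X n)) \<longlongrightarrow> 0) at_bot)"

definition jost_phibar :: "system \<Rightarrow> complex \<Rightarrow> int \<Rightarrow> complex \<times> complex" where
  "jost_phibar M z = (THE X. is_sol M z X \<and>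
      ((\<lambda>n. z powi (-n) * fst (X n)) \<longlongrightarrow> 0) at_bot \<and>
      ((\<lambda>n. z powi (-n) * snd (X n)) \<longlongrightarrow> 1) at_bot)"

definition trans_l :: "system \<Rightarrow> complex \<Rightarrow> complex" where
  "trans_l M z = 1 / Lim at_bot (\<lambda>n. z powi (-n) * snd (jost_psi M z n))"

definition trans_r :: "system \<Rightarrow> complex \<Rightarrow> complex" where
  "trans_r M z = 1 / Lim at_top (\<lambda>n. z powi n * fst (jost_phi M z n))"

definition transbar_l :: "system \<Rightarrow> complex \<Rightarrow> complex" where
  "transbar_l M z = 1 / Lim at_bot (\<lambda>n. z powi n * fst (jost_psibar M z n))"

definition transbar_r :: "system \<Rightarrow> complex \<Rightarrow> complex" where
  "transbar_r M z = 1 / Lim at_top (\<lambda>n. z powi (-n) * snd (jost_phibar M z n))"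

definition rapid_decay :: "(int \<Rightarrow> complex) \<Rightarrow> bool" where
  "rapid_decay q \<longleftrightarrow> (\<forall>k::nat.
      ((\<lambda>n. of_int \<bar>n\<bar> ^ k * q n) \<longlongrightarrow> 0) at_top \<and>
      ((\<lambda>n. of_int \<bar>n\<bar> ^ k * q n) \<longlongrightarrow> 0) at_bot)"

definition Dprod :: "(int \<Rightarrow> complex) \<Rightarrow> (int \<Rightarrow> complex) \<Rightarrow> int \<Rightarrow> complex" where
  "Dprod q r n = Lim at_bot (\<lambda>m. \<Prod>j\<in>{m..n}. 1 - q j * r j)"

definition Eprod :: "(int \<Rightarrow> complex) \<Rightarrow> (int \<Rightarrow> complex) \<Rightarrow> int \<Rightarrow> complex" where
  "Eprod q r n = Lim at_bot (\<lambda>m. \<Prod>j\<in>{m..n}. 1 + q j * r (j+1))"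

definition pot_u :: "(int \<Rightarrow> complex) \<Rightarrow> (int \<Rightarrow> complex) \<Rightarrow> int \<Rightarrow> complex" where
  "pot_u q r n = q n * Eprod q r (n-1) / Dprod q r n"

definition pot_v :: "(int \<Rightarrow> complex) \<Rightarrow> (int \<Rightarrow> complex) \<Rightarrow> int \<Rightarrow> complex" where
  "pot_v q r n = (- r n + r (n+1) - q n * r n * r (n+1)) * Dprod q r (n-1) / Eprod q r n"

definition pot_p :: "(int \<Rightarrow> complex) \<Rightarrow> (int \<Rightarrow> complex) \<Rightarrow> int \<Rightarrow> complex" where
  "pot_p q r n = (q n - q (n+1) - q n * q (n+1) * r (n+1)) * Eprod q r (n-1) / Dprod q r (n+1)"

definition pot_s :: "(int \<Rightarrow> complex) \<Rightarrow> (int \<Rightarrow> complex) \<Rightarrow> int \<Rightarrow> complex" where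
  "pot_s q r n = r (n+1) * Dprod q r n / Eprod q r n"

end

theory Submission
  imports Defs
begin

definition m11 :: "complex \<times> complex \<times> complex \<times> complex \<Rightarrow> complex" where "m11 A = fst A"
definition m12 :: "complex \<times> complex \<times> complex \<times> complex \<Rightarrow> complex" where "m12 A = fst (snd A)"
definition m21 :: "complex \<times> complex \<times> complex \<times> complex \<Rightarrow> complex" where "m21 A = fst (snd (snd A))"
definition m22 :: "complex \<times> complex \<times> complex \<times> complex \<Rightarrow> complex" where "m22 A = snd (snd (snd A))"
lemma mcomp [simp]: "m11 (a,b,c,d) = a" "m12 (a,b,c,d) = b" "m21 (a,b,c,d) = c" "m22 (a,b,c,d) = d"
  by (simp_all add: m11_def m12_def m21_def m22_def)

definition mapp :: "complex \<times> complex \<times> complex \<times> complex \<Rightarrow> complex \<times> complex \<Rightarrow> complex \<times> complex" where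
  "mapp A v = (m11 A * fst v + m12 A * snd v, m21 A * fst v + m22 A * snd v)"

definition nv :: "complex \<times> complex \<Rightarrow> real" where "nv v = cmod (fst v) + cmod (snd v)"
definition mn :: "complex \<times> complex \<times> complex \<times> complex \<Rightarrow> real" where
  "mn A = max (cmod (m11 A) + cmod (m21 A)) (cmod (m12 A) + cmod (m22 A))"

lemma nv_nonneg: "nv v \<ge> 0" by (simp add: nv_def)
lemma nv_zero_iff: "nv v = 0 \<longleftrightarrow> v = 0"
  by (cases v) (auto simp: nv_def add_nonneg_eq_0_iff zero_prod_def)

lemma nv_mapp: "nv (mapp A v) \<le> mn A * nv v"
proof -
  have "nv (mapp A v) \<le> (cmod (m11 A) * cmod (fst v) + cmod (m12 A) * cmod (snd v)) +
     (cmod (m21 A) * cmod (fst v) + cmod (m22 A) * cmod (snd v))"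
    unfolding nv_def mapp_def fst_conv snd_conv by (intro add_mono; rule order_trans[OF norm_triangle_ineq]) (simp_all add: norm_mult)
  also have "\<dots> = (cmod (m11 A) + cmod (m21 A)) * cmod (fst v) + (cmod (m12 A) + cmod (m22 A)) * cmod (snd v)"
    by (simp add: algebra_simps)
  also have "\<dots> \<le> mn A * cmod (fst v) + mn A * cmod (snd v)"
    unfolding mn_def by (intro add_mono mult_right_mono) auto
  finally show ?thesis by (simp add: nv_def algebra_simps)
qed

lemma mapp_add: "mapp A (u + v) = mapp A u + mapp A v"
  by (simp add: mapp_def algebra_simps)
lemma mapp_diff: "mapp A (u - v) = mapp A u - mapp A v"
  by (simp add: mapp_def algebra_simps)
lemma mapp_zero [simp]: "mapp A 0 = 0"
  by (simp add: mapp_def zero_prod_def)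

definition bsol :: "(int \<Rightarrow> complex \<times> complex \<times> complex \<times> complex) \<Rightarrow> (int \<Rightarrow> complex \<times> complex) \<Rightarrow> bool" where
  "bsol A X \<longleftrightarrow> (\<forall>n. X n = mapp (A n) (X (n+1)))"

fun pw :: "(int \<Rightarrow> complex \<times> complex \<times> complex \<times> complex) \<Rightarrow> int \<Rightarrow> nat \<Rightarrow> complex \<times> complex \<Rightarrow> complex \<times> complex" where
  "pw A n 0 v = v"
| "pw A n (Suc k) v = mapp (A n) (pw A (n+1) k v)"

lemma pw_diff: "pw A n k (u - v) = pw A n k u - pw A n k v"
  by (induction k arbitrary: n) (auto simp: mapp_diff)

lemma pw_Suc': "pw A n (Suc k) v = pw A n k (mapp (A (n + int k)) v)"
proof (induction k arbitrary: n)
  case 0 then show ?case by simp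
next
  case (Suc k)
  have "pw A n (Suc (Suc k)) v = mapp (A n) (pw A (n+1) (Suc k) v)" by (simp only: pw.simps)
  also have "\<dots> = mapp (A n) (pw A (n+1) k (mapp (A (n+1+int k)) v))" using Suc.IH by metis
  also have "\<dots> = pw A n (Suc k) (mapp (A (n + int (Suc k))) v)" by (simp add: add_ac)
  finally show ?case .
qed

lemma bsol_pw: "bsol A X \<Longrightarrow> X n = pw A n k (X (n + int k))"
proof (induction k arbitrary: n)
  case 0 then show ?case by simp
next
  case (Suc k)
  have 1: "X (n+1) = pw A (n+1) k (X (n + 1 + int k))" using Suc by blast
  have "X n = mapp (A n) (X (n+1))" using Suc.prems unfolding bsol_def by blast
  also have "\<dots> = mapp (A n) (pw A (n+1) k (X (n + 1 + int k)))" using 1 by simp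
  also have "\<dots> = pw A n (Suc k) (X (n + int (Suc k)))" by (simp add: add_ac)
  finally show ?case .
qed

lemma pw_bound:
  assumes "\<And>m. mn (A m) \<le> 1 + w m" "\<And>m. w m \<ge> 0"
  shows "nv (pw A n k v) \<le> exp (\<Sum>i<k. w (n + int i)) * nv v"
proof (induction k arbitrary: n)
  case 0 then show ?case by simp
next
  case (Suc k)
  have "nv (pw A n (Suc k) v) \<le> mn (A n) * nv (pw A (n+1) k v)"
    by (simp add: nv_mapp)
  also have "\<dots> \<le> (1 + w n) * (exp (\<Sum>i<k. w (n + 1 + int i)) * nv v)"
    by (intro mult_mono assms Suc nv_nonneg) (use assms(2)[of n] in auto)
  also have "\<dots> \<le> exp (w n) * (exp (\<Sum>i<k. w (n + 1 + int i)) * nv v)"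
    by (intro mult_right_mono) (auto simp: nv_nonneg exp_ge_add_one_self add.commute)
  also have "\<dots> = exp (\<Sum>i<Suc k. w (n + int i)) * nv v"
  proof -
    have "(\<Sum>i<Suc k. w (n + int i)) = w n + (\<Sum>i<k. w (n + 1 + int i))"
      by (subst sum.lessThan_Suc_shift) (simp add: add_ac)
    then show ?thesis by (simp add: exp_add)
  qed
  finally show ?case .
qed

lemma fl_top: "filterlim (\<lambda>k::nat. n0 + int k) at_top sequentially"
  unfolding filterlim_at_top
proof
  fix C :: int
  show "eventually (\<lambda>k. C \<le> n0 + int k) sequentially"
    using eventually_ge_at_top[of "nat (C - n0)"] by eventually_elim linarith
qed

lemma fl_top': "filterlim (\<lambda>n::int. nat (n - n0)) sequentially at_top"
  unfolding filterlim_at_top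
proof
  fix Z :: nat
  show "eventually (\<lambda>n::int. Z \<le> nat (n - n0)) at_top"
    using eventually_ge_at_top[of "n0 + int Z"] by eventually_elim linarith
qed

lemma fl_bot: "filterlim (\<lambda>k::nat. n0 - int k) at_bot sequentially"
  unfolding filterlim_at_bot
proof
  fix C :: int
  show "eventually (\<lambda>k. n0 - int k \<le> C) sequentially"
    using eventually_ge_at_top[of "nat (n0 - C)"] by eventually_elim linarith
qed

lemma fl_bot': "filterlim (\<lambda>n::int. nat (n0 - n)) sequentially at_bot"
  unfolding filterlim_at_top
proof
  fix Z :: nat
  show "eventually (\<lambda>n::int. Z \<le> nat (n0 - n)) at_bot"
    using eventually_le_at_bot[of "n0 - int Z"] by eventually_elim linarith
qed

lemma tendsto_top_iff:
  fixes f :: "int \<Rightarrow> 'a::topological_space"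
  shows "(f \<longlongrightarrow> L) at_top \<longleftrightarrow> ((\<lambda>k. f (n0 + int k)) \<longlongrightarrow> L) sequentially"
proof
  assume "(f \<longlongrightarrow> L) at_top"
  then show "((\<lambda>k. f (n0 + int k)) \<longlongrightarrow> L) sequentially"
    by (rule filterlim_compose[OF _ fl_top])
next
  assume "((\<lambda>k. f (n0 + int k)) \<longlongrightarrow> L) sequentially"
  then have "((\<lambda>n. f (n0 + int (nat (n - n0)))) \<longlongrightarrow> L) at_top"
    by (rule filterlim_compose[OF _ fl_top'])
  moreover have "eventually (\<lambda>n. f (n0 + int (nat (n - n0))) = f n) at_top"
    using eventually_ge_at_top[of n0] by eventually_elim auto
  ultimately show "(f \<longlongrightarrow> L) at_top" by (rule Lim_transform_eventually)
qed

lemma tendsto_bot_iff: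
  fixes f :: "int \<Rightarrow> 'a::topological_space"
  shows "(f \<longlongrightarrow> L) at_bot \<longleftrightarrow> ((\<lambda>k. f (n0 - int k)) \<longlongrightarrow> L) sequentially"
proof
  assume "(f \<longlongrightarrow> L) at_bot"
  then show "((\<lambda>k. f (n0 - int k)) \<longlongrightarrow> L) sequentially"
    by (rule filterlim_compose[OF _ fl_bot])
next
  assume "((\<lambda>k. f (n0 - int k)) \<longlongrightarrow> L) sequentially"
  then have "((\<lambda>n. f (n0 - int (nat (n0 - n)))) \<longlongrightarrow> L) at_bot"
    by (rule filterlim_compose[OF _ fl_bot'])
  moreover have "eventually (\<lambda>n. f (n0 - int (nat (n0 - n))) = f n) at_bot"
    using eventually_le_at_bot[of n0] by eventually_elim auto
  ultimately show "(f \<longlongrightarrow> L) at_bot" by (rule Lim_transform_eventually)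
qed

lemma tail_tendsto:
  fixes f :: "nat \<Rightarrow> real"
  assumes "summable f"
  shows "(\<lambda>k. \<Sum>i. f (i + k)) \<longlonglongrightarrow> 0"
proof -
  have "(\<lambda>k. suminf f - (\<Sum>i<k. f i)) \<longlonglongrightarrow> suminf f - suminf f"
    by (intro tendsto_intros summable_LIMSEQ assms)
  moreover have "(\<Sum>i. f (i + k)) = suminf f - (\<Sum>i<k. f i)" for k
    using suminf_split_initial_segment[OF assms, of k] by simp
  ultimately show ?thesis by simp
qed

lemma nv_tri: "nv (u - v) \<le> nv (u - e) + nv (v - e)"
proof -
  have 1: "fst (u - v) = fst (u - e) - fst (v - e)" "snd (u - v) = snd (u - e) - snd (v - e)" by simp_all
  show ?thesis unfolding nv_def 1
    using norm_triangle_ineq4[of "fst (u - e)" "fst (v - e)"] norm_triangle_ineq4[of "snd (u - e)" "snd (v - e)"]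
    by linarith
qed

locale wsys =
  fixes A :: "int \<Rightarrow> complex \<times> complex \<times> complex \<times> complex" and w :: "int \<Rightarrow> real"
  assumes w_nonneg: "\<And>m. w m \<ge> 0"
    and A_bound: "\<And>m. mn (A m) \<le> 1 + w m"
    and w_sum_top: "\<And>n. summable (\<lambda>i. w (n + int i))"
    and w_sum_bot: "\<And>n. summable (\<lambda>i. w (n - int i))"
begin

definition Stop :: "int \<Rightarrow> real" where "Stop n = (\<Sum>i. w (n + int i))"
definition Sbot :: "int \<Rightarrow> real" where "Sbot n = (\<Sum>i. w (n - int i))"

lemma Stop_nonneg: "Stop n \<ge> 0"
  unfolding Stop_def by (intro suminf_nonneg w_sum_top w_nonneg)

lemma sum_le_Stop: "(\<Sum>i<k. w (n + int i)) \<le> Stop n"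
  unfolding Stop_def by (intro sum_le_suminf w_sum_top w_nonneg) auto

lemma sum_le_Sbot: "(\<Sum>i<k. w (n - int i)) \<le> Sbot n"
  unfolding Sbot_def by (intro sum_le_suminf w_sum_bot w_nonneg) auto

lemma pw_bd: "nv (pw A n k v) \<le> exp (Stop n) * nv v"
proof -
  have "nv (pw A n k v) \<le> exp (\<Sum>i<k. w (n + int i)) * nv v"
    by (intro pw_bound A_bound w_nonneg)
  also have "\<dots> \<le> exp (Stop n) * nv v"
    by (intro mult_right_mono nv_nonneg) (simp add: sum_le_Stop)
  finally show ?thesis .
qed

lemma Stop_shift: "Stop (n0 + int k) = (\<Sum>i. w (n0 + int (i + k)))"
  unfolding Stop_def by (simp add: add_ac)

lemma Stop_mono: assumes "n \<ge> n0" shows "Stop n \<le> Stop n0"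
proof -
  define k where "k = nat (n - n0)"
  have n: "n = n0 + int k" using assms k_def by simp
  have "Stop n0 = (\<Sum>i. w (n0 + int (i + k))) + (\<Sum>i<k. w (n0 + int i))"
    unfolding Stop_def using suminf_split_initial_segment[OF w_sum_top[of n0], of k] by simp
  moreover have "(\<Sum>i<k. w (n0 + int i)) \<ge> 0" by (intro sum_nonneg w_nonneg)
  ultimately show ?thesis unfolding n Stop_shift by simp
qed

lemma Stop_tendsto: "(Stop \<longlongrightarrow> 0) at_top"
proof -
  have "(\<lambda>k. \<Sum>i. w (0 + int (i + k))) \<longlonglongrightarrow> 0"
    using tail_tendsto[OF w_sum_top[of 0]] by simp
  then show ?thesis
    unfolding tendsto_top_iff[of _ _ 0] Stop_shift by simp
qed

lemma uniq:
  assumes "bsol A X" "((\<lambda>n. nv (X n)) \<longlongrightarrow> 0) at_top"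
  shows "X n = 0"
proof -
  have le: "nv (X n) \<le> exp (Stop n) * nv (X (n + int k))" for k
    using pw_bd[of n k "X (n + int k)"] bsol_pw[OF assms(1), of n k] by simp
  have "((\<lambda>k. nv (X (n + int k))) \<longlongrightarrow> 0) sequentially"
    using iffD1[OF tendsto_top_iff[of _ _ n] assms(2)] by simp
  then have "((\<lambda>k. exp (Stop n) * nv (X (n + int k))) \<longlongrightarrow> exp (Stop n) * 0) sequentially"
    by (intro tendsto_intros)
  then have "nv (X n) \<le> 0"
    using le by (intro LIMSEQ_le_const[where X="\<lambda>k. exp (Stop n) * nv (X (n + int k))"]) auto
  then have "nv (X n) = 0" using nv_nonneg[of "X n"] by linarith
  then show ?thesis by (simp add: nv_zero_iff)
qed

lemma bsol_diff: assumes "bsol A X" "bsol A Y" shows "bsol A (\<lambda>n. X n - Y n)"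
  unfolding bsol_def
proof
  fix n
  have "X n = mapp (A n) (X (n+1))" "Y n = mapp (A n) (Y (n+1))" using assms unfolding bsol_def by blast+
  then show "X n - Y n = mapp (A n) (X (n+1) - Y (n+1))" by (simp add: mapp_diff)
qed

lemma uniq2:
  assumes "bsol A X" "bsol A Y" "((\<lambda>n. nv (X n - e)) \<longlongrightarrow> 0) at_top" "((\<lambda>n. nv (Y n - e)) \<longlongrightarrow> 0) at_top"
  shows "X = Y"
proof
  fix n
  have le: "nv (X n - Y n) \<le> nv (X n - e) + nv (Y n - e)" for n
    by (rule nv_tri)
  have lim: "((\<lambda>n. nv (X n - e) + nv (Y n - e)) \<longlongrightarrow> 0) at_top"
    using tendsto_add_zero[OF assms(3,4)] .
  have "((\<lambda>n. nv (X n - Y n)) \<longlongrightarrow> 0) at_top"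
    by (rule tendsto_sandwich[OF _ _ tendsto_const lim]) (auto simp: nv_nonneg le)
  then have "X n - Y n = 0" by (intro uniq bsol_diff assms)
  then show "X n = Y n" by simp
qed

end

context wsys
begin

lemma exist:
  assumes e: "\<And>m. nv (mapp (A m) e - e) \<le> w m"
  shows "\<exists>X. bsol A X \<and> ((\<lambda>n. nv (X n - e)) \<longlongrightarrow> 0) at_top"
proof -
  define d where "d n i = pw A n i (mapp (A (n + int i)) e - e)" for n i
  have dbd: "nv (d n i) \<le> exp (Stop n) * w (n + int i)" for n i
  proof -
    have "nv (d n i) \<le> exp (Stop n) * nv (mapp (A (n + int i)) e - e)"
      unfolding d_def by (rule pw_bd)
    also have "\<dots> \<le> exp (Stop n) * w (n + int i)"
      by (intro mult_left_mono e) auto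
    finally show ?thesis .
  qed
  have sumd: "summable (\<lambda>i. nv (d n i))" for n
    by (rule summable_comparison_test'[OF summable_mult[OF w_sum_top[of n], of "exp (Stop n)"], of 0])
       (use dbd nv_nonneg in auto)
  have sum1: "summable (\<lambda>i. fst (d n i))" "summable (\<lambda>i. snd (d n i))" for n
    by (rule summable_comparison_test'[OF sumd[of n], of 0]; simp add: nv_def)+
  have dSuc: "d n (Suc i) = mapp (A n) (d (n+1) i)" for n i
    unfolding d_def by (simp add: add_ac)
  have d0: "d n 0 = mapp (A n) e - e" for n
    unfolding d_def by simp
  define X where "X n = (fst e + (\<Sum>i. fst (d n i)), snd e + (\<Sum>i. snd (d n i)))" for n
  have "bsol A X"
    unfolding bsol_def
  proof
    fix n
    obtain a b c dd where Aeq: "A n = (a, b, c, dd)" by (cases "A n") auto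
    have s1: "(\<Sum>i. fst (d n i)) = fst (d n 0) + (\<Sum>i. fst (d n (Suc i)))"
      using suminf_split_head[OF sum1(1)[of n]] by simp
    have s2: "(\<Sum>i. snd (d n i)) = snd (d n 0) + (\<Sum>i. snd (d n (Suc i)))"
      using suminf_split_head[OF sum1(2)[of n]] by simp
    have f1: "(\<Sum>i. fst (d n (Suc i))) = a * (\<Sum>i. fst (d (n+1) i)) + b * (\<Sum>i. snd (d (n+1) i))"
      unfolding dSuc by (simp add: mapp_def Aeq suminf_add[symmetric] suminf_mult sum1 summable_mult)
    have f2: "(\<Sum>i. snd (d n (Suc i))) = c * (\<Sum>i. fst (d (n+1) i)) + dd * (\<Sum>i. snd (d (n+1) i))"
      unfolding dSuc by (simp add: mapp_def Aeq suminf_add[symmetric] suminf_mult sum1 summable_mult)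
    show "X n = mapp (A n) (X (n+1))"
      unfolding X_def s1 s2 f1 f2 d0 by (simp add: mapp_def Aeq algebra_simps)
  qed
  moreover have "((\<lambda>n. nv (X n - e)) \<longlongrightarrow> 0) at_top"
  proof -
    have le: "nv (X n - e) \<le> 2 * exp (Stop 0) * Stop n" if "n \<ge> 0" for n
    proof -
      have "nv (X n - e) = cmod (\<Sum>i. fst (d n i)) + cmod (\<Sum>i. snd (d n i))"
        by (simp add: X_def nv_def)
      also have "\<dots> \<le> (\<Sum>i. cmod (fst (d n i))) + (\<Sum>i. cmod (snd (d n i)))"
        by (intro add_mono summable_norm summable_comparison_test'[OF sumd[of n], of 0]) (auto simp: nv_def)
      also have "\<dots> \<le> (\<Sum>i. nv (d n i)) + (\<Sum>i. nv (d n i))"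
        by (intro add_mono suminf_le sumd summable_comparison_test'[OF sumd[of n], of 0]) (auto simp: nv_def)
      also have "(\<Sum>i. nv (d n i)) \<le> (\<Sum>i. exp (Stop n) * w (n + int i))"
        by (intro suminf_le sumd dbd summable_mult w_sum_top)
      also have "\<dots> = exp (Stop n) * Stop n"
        unfolding Stop_def by (intro suminf_mult w_sum_top)
      also have "\<dots> \<le> exp (Stop 0) * Stop n"
        by (intro mult_right_mono Stop_nonneg) (use Stop_mono[OF that] in auto)
      finally show ?thesis by (simp add: ac_simps)
    qed
    have "((\<lambda>n. 2 * exp (Stop 0) * Stop n) \<longlongrightarrow> 2 * exp (Stop 0) * 0) at_top"
      by (intro tendsto_intros Stop_tendsto)
    then have lim: "((\<lambda>n. 2 * exp (Stop 0) * Stop n) \<longlongrightarrow> 0) at_top" by simp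
    have ev: "eventually (\<lambda>n. nv (X n - e) \<le> 2 * exp (Stop 0) * Stop n) at_top"
      using eventually_ge_at_top[of "0::int"] by eventually_elim (rule le)
    show ?thesis
      by (rule tendsto_sandwich[OF _ ev tendsto_const lim]) (simp add: nv_nonneg)
  qed
  ultimately show ?thesis by blast
qed

lemma bounded_bot:
  assumes "bsol A X" and that: "n \<le> n0"
  shows "nv (X n) \<le> exp (Sbot (n0 - 1)) * nv (X n0)"
proof -
  define k where "k = nat (n0 - n)"
  have n: "n = n0 - int k" using that k_def by simp
  have "X n = pw A n k (X (n + int k))" by (rule bsol_pw[OF assms(1)])
  then have "nv (X n) \<le> exp (\<Sum>i<k. w (n + int i)) * nv (X n0)"
    using pw_bound[OF A_bound w_nonneg, where n=n and k=k and v="X n0"] by (simp add: n)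
  also have "(\<Sum>i<k. w (n + int i)) = (\<Sum>i<k. w (n0 - 1 - int i))"
  proof -
    have "(\<Sum>i<k. w (n0 - 1 - int i)) = (\<Sum>i<k. w (n0 - 1 - int (k - Suc i)))"
      by (rule sum.nat_diff_reindex[symmetric])
    also have "\<dots> = (\<Sum>i<k. w (n + int i))"
      by (intro sum.cong refl) (auto simp: n of_nat_diff algebra_simps)
    finally show ?thesis by simp
  qed
  also have "exp (\<Sum>i<k. w (n0 - 1 - int i)) * nv (X n0) \<le> exp (Sbot (n0 - 1)) * nv (X n0)"
    by (intro mult_right_mono nv_nonneg) (use sum_le_Sbot in auto)
  finally show ?thesis .
qed

lemma conv_bot_snd:
  assumes "bsol A X" and col: "\<And>n. cmod (m21 (A n)) + cmod (m22 (A n) - 1) \<le> w n"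
  shows "\<exists>L. ((\<lambda>n. snd (X n)) \<longlongrightarrow> L) at_bot"
proof -
  define C where "C = exp (Sbot (0 - 1)) * nv (X 0)"
  have bd: "nv (X n) \<le> C" if "n \<le> 0" for n
    unfolding C_def by (rule bounded_bot[OF assms(1) that])
  have Cnn: "C \<ge> 0" unfolding C_def by (simp add: nv_nonneg)
  have bd1: "cmod (fst (X n)) \<le> C" "cmod (snd (X n)) \<le> C" if "n \<le> 0" for n
    using bd[OF that] norm_ge_zero[of "fst (X n)"] norm_ge_zero[of "snd (X n)"] unfolding nv_def by linarith+
  define y where "y k = snd (X (0 - int k))" for k
  have step: "norm (y (Suc k) - y k) \<le> C * w (-1 - int k)" for k
  proof -
    define m where "m = -1 - int k"
    have X: "X m = mapp (A m) (X (m+1))" using assms(1) unfolding bsol_def by blast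
    have "y (Suc k) - y k = snd (X m) - snd (X (m+1))" by (simp add: y_def m_def)
    also have "\<dots> = m21 (A m) * fst (X (m+1)) + (m22 (A m) - 1) * snd (X (m+1))"
      by (subst X) (simp add: mapp_def algebra_simps)
    finally have "norm (y (Suc k) - y k) \<le> cmod (m21 (A m)) * cmod (fst (X (m+1))) + cmod (m22 (A m) - 1) * cmod (snd (X (m+1)))"
      by (simp add: norm_mult order_trans[OF norm_triangle_ineq])
    also have "\<dots> \<le> cmod (m21 (A m)) * C + cmod (m22 (A m) - 1) * C"
      using bd1[of "m+1"] by (intro add_mono mult_left_mono) (auto simp: m_def)
    also have "\<dots> \<le> w m * C"
      using mult_right_mono[OF col[of m] Cnn] by (simp add: distrib_right)
    finally show ?thesis by (simp add: m_def mult.commute)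
  qed
  have "summable (\<lambda>k. y (Suc k) - y k)"
    by (rule summable_comparison_test'[OF summable_mult[OF w_sum_bot[of "-1"], of C], of 0]) (use step in auto)
  then have "(\<lambda>k. \<Sum>i<k. y (Suc i) - y i) \<longlonglongrightarrow> (\<Sum>i. y (Suc i) - y i)"
    by (rule summable_LIMSEQ)
  then have "(\<lambda>k. y 0 + (\<Sum>i<k. y (Suc i) - y i)) \<longlonglongrightarrow> y 0 + (\<Sum>i. y (Suc i) - y i)"
    by (intro tendsto_intros)
  then have "y \<longlonglongrightarrow> y 0 + (\<Sum>i. y (Suc i) - y i)"
    by (simp add: sum_lessThan_telescope)
  then have "((\<lambda>n. snd (X n)) \<longlongrightarrow> y 0 + (\<Sum>i. y (Suc i) - y i)) at_bot"
    unfolding tendsto_bot_iff[of _ _ 0] y_def by simp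
  then show ?thesis by blast
qed

lemma conv_bot_fst:
  assumes "bsol A X" and col: "\<And>n. cmod (m11 (A n) - 1) + cmod (m12 (A n)) \<le> w n"
  shows "\<exists>L. ((\<lambda>n. fst (X n)) \<longlongrightarrow> L) at_bot"
proof -
  define C where "C = exp (Sbot (0 - 1)) * nv (X 0)"
  have bd: "nv (X n) \<le> C" if "n \<le> 0" for n
    unfolding C_def by (rule bounded_bot[OF assms(1) that])
  have Cnn: "C \<ge> 0" unfolding C_def by (simp add: nv_nonneg)
  have bd1: "cmod (fst (X n)) \<le> C" "cmod (snd (X n)) \<le> C" if "n \<le> 0" for n
    using bd[OF that] norm_ge_zero[of "fst (X n)"] norm_ge_zero[of "snd (X n)"] unfolding nv_def by linarith+
  define y where "y k = fst (X (0 - int k))" for k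
  have step: "norm (y (Suc k) - y k) \<le> C * w (-1 - int k)" for k
  proof -
    define m where "m = -1 - int k"
    have X: "X m = mapp (A m) (X (m+1))" using assms(1) unfolding bsol_def by blast
    have "y (Suc k) - y k = fst (X m) - fst (X (m+1))" by (simp add: y_def m_def)
    also have "\<dots> = (m11 (A m) - 1) * fst (X (m+1)) + m12 (A m) * snd (X (m+1))"
      by (subst X) (simp add: mapp_def algebra_simps)
    finally have "norm (y (Suc k) - y k) \<le> cmod (m11 (A m) - 1) * cmod (fst (X (m+1))) + cmod (m12 (A m)) * cmod (snd (X (m+1)))"
      by (simp add: norm_mult order_trans[OF norm_triangle_ineq])
    also have "\<dots> \<le> cmod (m11 (A m) - 1) * C + cmod (m12 (A m)) * C"
      using bd1[of "m+1"] by (intro add_mono mult_left_mono) (auto simp: m_def)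
    also have "\<dots> \<le> w m * C"
      using mult_right_mono[OF col[of m] Cnn] by (simp add: distrib_right)
    finally show ?thesis by (simp add: m_def mult.commute)
  qed
  have "summable (\<lambda>k. y (Suc k) - y k)"
    by (rule summable_comparison_test'[OF summable_mult[OF w_sum_bot[of "-1"], of C], of 0]) (use step in auto)
  then have "(\<lambda>k. \<Sum>i<k. y (Suc i) - y i) \<longlonglongrightarrow> (\<Sum>i. y (Suc i) - y i)"
    by (rule summable_LIMSEQ)
  then have "(\<lambda>k. y 0 + (\<Sum>i<k. y (Suc i) - y i)) \<longlonglongrightarrow> y 0 + (\<Sum>i. y (Suc i) - y i)"
    by (intro tendsto_intros)
  then have "y \<longlonglongrightarrow> y 0 + (\<Sum>i. y (Suc i) - y i)"
    by (simp add: sum_lessThan_telescope)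
  then have "((\<lambda>n. fst (X n)) \<longlongrightarrow> y 0 + (\<Sum>i. y (Suc i) - y i)) at_bot"
    unfolding tendsto_bot_iff[of _ _ 0] y_def by simp
  then show ?thesis by blast
qed

end

definition sm :: "complex \<Rightarrow> complex \<times> complex \<Rightarrow> complex \<times> complex" where
  "sm c v = (c * fst v, c * snd v)"
definition smat :: "complex \<Rightarrow> complex \<times> complex \<times> complex \<times> complex \<Rightarrow> complex \<times> complex \<times> complex \<times> complex" where
  "smat c A = (c * m11 A, c * m12 A, c * m21 A, c * m22 A)"
definition mmul :: "complex \<times> complex \<times> complex \<times> complex \<Rightarrow> complex \<times> complex \<times> complex \<times> complex \<Rightarrow> complex \<times> complex \<times> complex \<times> complex" where
  "mmul A B = (m11 A * m11 B + m12 A * m21 B, m11 A * m12 B + m12 A * m22 B,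
               m21 A * m11 B + m22 A * m21 B, m21 A * m12 B + m22 A * m22 B)"
definition idm :: "complex \<times> complex \<times> complex \<times> complex" where "idm = (1, 0, 0, 1)"

definition JP :: "system \<Rightarrow> complex \<Rightarrow> int filter \<Rightarrow> (int \<Rightarrow> complex) \<Rightarrow> complex \<Rightarrow> complex \<Rightarrow> (int \<Rightarrow> complex \<times> complex) \<Rightarrow> bool" where
  "JP M z F \<sigma> e1 e2 X \<longleftrightarrow> is_sol M z X \<and> ((\<lambda>n. \<sigma> n * fst (X n)) \<longlongrightarrow> e1) F \<and> ((\<lambda>n. \<sigma> n * snd (X n)) \<longlongrightarrow> e2) F"

lemma jost_psi_JP: "jost_psi M z = (THE X. JP M z at_top (\<lambda>n. z powi (-n)) 0 1 X)"
  unfolding jost_psi_def JP_def ..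
lemma jost_psibar_JP: "jost_psibar M z = (THE X. JP M z at_top (\<lambda>n. z powi n) 1 0 X)"
  unfolding jost_psibar_def JP_def ..
lemma jost_phi_JP: "jost_phi M z = (THE X. JP M z at_bot (\<lambda>n. z powi n) 1 0 X)"
  unfolding jost_phi_def JP_def ..
lemma jost_phibar_JP: "jost_phibar M z = (THE X. JP M z at_bot (\<lambda>n. z powi (-n)) 0 1 X)"
  unfolding jost_phibar_def JP_def ..

lemma mapp_mmul: "mapp (mmul A B) v = mapp A (mapp B v)"
  by (simp add: mapp_def mmul_def algebra_simps)
lemma mapp_idm [simp]: "mapp idm v = v"
  by (simp add: mapp_def idm_def)
lemma mapp_sm: "mapp A (sm c v) = sm c (mapp A v)"
  by (simp add: mapp_def sm_def algebra_simps)
lemma mapp_smat: "mapp (smat c A) v = sm c (mapp A v)"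
  by (simp add: mapp_def sm_def smat_def algebra_simps)
lemma sm_sm: "sm a (sm b v) = sm (a * b) v"
  by (simp add: sm_def)
lemma sm_1 [simp]: "sm 1 v = v"
  by (simp add: sm_def)
lemma sm_inj: "c \<noteq> 0 \<Longrightarrow> sm c u = sm c v \<longleftrightarrow> u = v"
  by (auto simp: sm_def prod_eq_iff)
lemma mmul_assoc: "mmul (mmul A B) C = mmul A (mmul B C)"
  by (simp add: mmul_def algebra_simps)
lemma mmul_idm [simp]: "mmul idm A = A" "mmul A idm = A"
  by (cases A; simp add: mmul_def idm_def)+

lemma is_sol_bsol: "is_sol M z X \<longleftrightarrow> bsol (M z) X"
proof -
  have "(case M z n of (a, b, c, d) \<Rightarrow>
      fst (X n) = a * fst (X (n+1)) + b * snd (X (n+1)) \<and>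
      snd (X n) = c * fst (X (n+1)) + d * snd (X (n+1))) \<longleftrightarrow> X n = mapp (M z n) (X (n+1))" for n
  proof -
    obtain a b c d where h: "M z n = (a,b,c,d)" by (cases "M z n") auto
    show ?thesis by (simp add: h mapp_def prod_eq_iff)
  qed
  then show ?thesis unfolding is_sol_def bsol_def by simp
qed

lemma nv_tendsto_iff:
  "((\<lambda>n. nv (Y n - e)) \<longlongrightarrow> 0) F \<longleftrightarrow> ((\<lambda>n. fst (Y n)) \<longlongrightarrow> fst e) F \<and> ((\<lambda>n. snd (Y n)) \<longlongrightarrow> snd e) F"
proof
  assume a: "((\<lambda>n. nv (Y n - e)) \<longlongrightarrow> 0) F"
  have "((\<lambda>n. fst (Y n) - fst e) \<longlongrightarrow> 0) F"
    by (rule tendsto_0_le[OF a, of _ 1]) (auto simp: nv_def)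
  moreover have "((\<lambda>n. snd (Y n) - snd e) \<longlongrightarrow> 0) F"
    by (rule tendsto_0_le[OF a, of _ 1]) (auto simp: nv_def)
  ultimately show "((\<lambda>n. fst (Y n)) \<longlongrightarrow> fst e) F \<and> ((\<lambda>n. snd (Y n)) \<longlongrightarrow> snd e) F"
    by (simp add: LIM_zero_iff)
next
  assume "((\<lambda>n. fst (Y n)) \<longlongrightarrow> fst e) F \<and> ((\<lambda>n. snd (Y n)) \<longlongrightarrow> snd e) F"
  then have "((\<lambda>n. fst (Y n) - fst e) \<longlongrightarrow> 0) F" "((\<lambda>n. snd (Y n) - snd e) \<longlongrightarrow> 0) F"
    by (auto intro: LIM_zero)
  then have "((\<lambda>n. cmod (fst (Y n) - fst e) + cmod (snd (Y n) - snd e)) \<longlongrightarrow> 0) F"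
    by (intro tendsto_add_zero tendsto_norm_zero)
  then show "((\<lambda>n. nv (Y n - e)) \<longlongrightarrow> 0) F" by (simp add: nv_def)
qed

lemma scal_rel:
  assumes "\<sigma>n = \<rho> * \<sigma>1" "\<sigma>n \<noteq> 0"
  shows "sm \<sigma>n u = mapp (smat \<rho> B) (sm \<sigma>1 v) \<longleftrightarrow> u = mapp B v"
proof -
  have "mapp (smat \<rho> B) (sm \<sigma>1 v) = sm \<sigma>n (mapp B v)"
    by (simp add: mapp_smat mapp_sm sm_sm assms(1) mult.commute)
  then show ?thesis using sm_inj[OF assms(2)] by simp
qed

lemma JT:
  assumes ws: "wsys A w" and snz: "\<And>n. \<sigma> n \<noteq> 0" and srec: "\<And>n. \<sigma> n = \<rho> * \<sigma> (n+1)"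
    and AM: "\<And>n. A n = smat \<rho> (M z n)"
    and e: "\<And>m. nv (mapp (A m) (e1, e2) - (e1, e2)) \<le> w m"
  shows "\<exists>!X. JP M z at_top \<sigma> e1 e2 X"
    and "\<And>X. JP M z at_top \<sigma> e1 e2 X \<Longrightarrow> bsol A (\<lambda>n. sm (\<sigma> n) (X n))"
proof -
  have rel: "is_sol M z X \<longleftrightarrow> bsol A (\<lambda>n. sm (\<sigma> n) (X n))" for X
    unfolding is_sol_bsol bsol_def AM using scal_rel[OF srec snz] by simp
  have jp: "JP M z at_top \<sigma> e1 e2 X \<longleftrightarrow> bsol A (\<lambda>n. sm (\<sigma> n) (X n)) \<and>
      ((\<lambda>n. nv (sm (\<sigma> n) (X n) - (e1, e2))) \<longlongrightarrow> 0) at_top" for X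
    unfolding JP_def rel nv_tendsto_iff by (simp add: sm_def)
  show "\<And>X. JP M z at_top \<sigma> e1 e2 X \<Longrightarrow> bsol A (\<lambda>n. sm (\<sigma> n) (X n))"
    using jp by blast
  obtain Y where Y: "bsol A Y" "((\<lambda>n. nv (Y n - (e1, e2))) \<longlongrightarrow> 0) at_top"
    using wsys.exist[OF ws e] by blast
  define X where "X n = sm (1 / \<sigma> n) (Y n)" for n
  have XY: "(\<lambda>n. sm (\<sigma> n) (X n)) = Y"
    by (simp add: X_def sm_sm snz)
  have XY': "sm (\<sigma> n) (X n) = Y n" for n using XY by metis
  have "JP M z at_top \<sigma> e1 e2 X" unfolding jp XY' using Y by blast
  moreover have "X' = X" if "JP M z at_top \<sigma> e1 e2 X'" for X'
  proof -
    have "(\<lambda>n. sm (\<sigma> n) (X' n)) = (\<lambda>n. sm (\<sigma> n) (X n))"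
      using that \<open>JP M z at_top \<sigma> e1 e2 X\<close> unfolding jp by (intro wsys.uniq2[OF ws]) auto
    then show ?thesis using sm_inj[OF snz] by (auto simp: fun_eq_iff)
  qed
  ultimately show "\<exists>!X. JP M z at_top \<sigma> e1 e2 X" by blast
qed

lemma tendsto_bot_mirror:
  fixes f :: "int \<Rightarrow> 'a::topological_space"
  shows "(f \<longlongrightarrow> L) at_bot \<longleftrightarrow> ((\<lambda>m. f (-m)) \<longlongrightarrow> L) at_top"
  by (simp add: at_bot_mirror filterlim_filtermap)

lemma tendsto_top_mirror:
  fixes f :: "int \<Rightarrow> 'a::topological_space"
  shows "(f \<longlongrightarrow> L) at_top \<longleftrightarrow> ((\<lambda>m. f (-m)) \<longlongrightarrow> L) at_bot"
  by (simp add: at_top_mirror filterlim_filtermap)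

lemma RF:
  assumes inv1: "\<And>n. mmul (M z n) (S n) = idm" and inv2: "\<And>n. mmul (S n) (M z n) = idm"
    and M': "\<And>m. M' z m = S (-m-1)"
  shows "is_sol M z X \<longleftrightarrow> is_sol M' z (\<lambda>m. X (-m))"
    and "JP M z at_bot \<sigma> e1 e2 X \<longleftrightarrow> JP M' z at_top (\<lambda>m. \<sigma> (-m)) e1 e2 (\<lambda>m. X (-m))"
proof -
  have fw: "(\<forall>n. X n = mapp (M z n) (X (n+1))) \<longleftrightarrow> (\<forall>n. X (n+1) = mapp (S n) (X n))"
  proof
    assume h: "\<forall>n. X n = mapp (M z n) (X (n+1))"
    show "\<forall>n. X (n+1) = mapp (S n) (X n)"
    proof
      fix n
      have "mapp (S n) (X n) = mapp (S n) (mapp (M z n) (X (n+1)))" using h by metis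
      also have "\<dots> = X (n+1)" by (simp add: mapp_mmul[symmetric] inv2)
      finally show "X (n+1) = mapp (S n) (X n)" by simp
    qed
  next
    assume h: "\<forall>n. X (n+1) = mapp (S n) (X n)"
    show "\<forall>n. X n = mapp (M z n) (X (n+1))"
    proof
      fix n
      have "mapp (M z n) (X (n+1)) = mapp (M z n) (mapp (S n) (X n))" using h by metis
      also have "\<dots> = X n" by (simp add: mapp_mmul[symmetric] inv1)
      finally show "X n = mapp (M z n) (X (n+1))" by simp
    qed
  qed
  have "(\<forall>n. X (n+1) = mapp (S n) (X n)) \<longleftrightarrow> (\<forall>m. X (-m) = mapp (S (-m-1)) (X (-(m+1))))"
  proof
    assume h: "\<forall>n. X (n+1) = mapp (S n) (X n)"
    show "\<forall>m. X (-m) = mapp (S (-m-1)) (X (-(m+1)))"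
    proof
      fix m
      have "X (-m-1+1) = mapp (S (-m-1)) (X (-m-1))" using h by blast
      moreover have "-m-1+1 = -m" "-m-1 = -(m+1)" by simp_all
      ultimately show "X (-m) = mapp (S (-m-1)) (X (-(m+1)))" by metis
    qed
  next
    assume h: "\<forall>m. X (-m) = mapp (S (-m-1)) (X (-(m+1)))"
    show "\<forall>n. X (n+1) = mapp (S n) (X n)"
    proof
      fix n
      have "X (-(-n-1)) = mapp (S (-(-n-1)-1)) (X (-((-n-1)+1)))" using h by blast
      moreover have "-(-n-1) = n+1" "-(-n-1)-1 = n" "-((-n-1)+1) = n" by simp_all
      ultimately show "X (n+1) = mapp (S n) (X n)" by metis
    qed
  qed
  then show sol: "is_sol M z X \<longleftrightarrow> is_sol M' z (\<lambda>m. X (-m))"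
    unfolding is_sol_bsol bsol_def fw M' by simp
  show "JP M z at_bot \<sigma> e1 e2 X \<longleftrightarrow> JP M' z at_top (\<lambda>m. \<sigma> (-m)) e1 e2 (\<lambda>m. X (-m))"
    unfolding JP_def sol tendsto_bot_mirror by simp
qed

lemma ex1_mirror:
  fixes P Q :: "(int \<Rightarrow> 'b) \<Rightarrow> bool"
  assumes "\<exists>!Y. P (\<lambda>m. Y m)" "\<And>X. Q X \<longleftrightarrow> P (\<lambda>m. X (-m))"
  shows "\<exists>!X. Q X"
proof -
  obtain Y where Y: "P Y" "\<And>Y'. P Y' \<Longrightarrow> Y' = Y" using assms(1) by blast
  have e: "(\<lambda>m. Y (- (- m))) = Y" by simp
  have "Q (\<lambda>n. Y (-n)) \<longleftrightarrow> P Y" using assms(2)[of "\<lambda>n. Y (-n)"] by (simp only: e)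
  then have "Q (\<lambda>n. Y (-n))" using Y(1) by blast
  moreover have "X = (\<lambda>n. Y (-n))" if "Q X" for X
  proof -
    have "(\<lambda>m. X (-m)) = Y" using Y(2) assms(2) that by blast
    then have "X (- (- n)) = Y (-n)" for n by (metis (no_types))
    then show ?thesis by (simp add: fun_eq_iff)
  qed
  ultimately show ?thesis by blast
qed

lemma mlim:
  assumes "(G \<longlongrightarrow> Gi) F"
  shows "((\<lambda>n. m11 (G n)) \<longlongrightarrow> m11 Gi) F" "((\<lambda>n. m12 (G n)) \<longlongrightarrow> m12 Gi) F"
        "((\<lambda>n. m21 (G n)) \<longlongrightarrow> m21 Gi) F" "((\<lambda>n. m22 (G n)) \<longlongrightarrow> m22 Gi) F"
  unfolding m11_def m12_def m21_def m22_def by (intro tendsto_intros assms)+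

lemma SL:
  assumes "(G \<longlongrightarrow> Gi) F" "((\<lambda>n. \<sigma> n * fst (X n)) \<longlongrightarrow> a) F" "((\<lambda>n. \<sigma> n * snd (X n)) \<longlongrightarrow> b) F"
  shows "((\<lambda>n. \<sigma> n * fst (mapp (G n) (X n))) \<longlongrightarrow> fst (mapp Gi (a, b))) F"
    and "((\<lambda>n. \<sigma> n * snd (mapp (G n) (X n))) \<longlongrightarrow> snd (mapp Gi (a, b))) F"
proof -
  have "((\<lambda>n. m11 (G n) * (\<sigma> n * fst (X n)) + m12 (G n) * (\<sigma> n * snd (X n))) \<longlongrightarrow> m11 Gi * a + m12 Gi * b) F"
    by (intro tendsto_intros mlim assms)
  then show "((\<lambda>n. \<sigma> n * fst (mapp (G n) (X n))) \<longlongrightarrow> fst (mapp Gi (a, b))) F"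
    by (simp add: mapp_def algebra_simps)
  have "((\<lambda>n. m21 (G n) * (\<sigma> n * fst (X n)) + m22 (G n) * (\<sigma> n * snd (X n))) \<longlongrightarrow> m21 Gi * a + m22 Gi * b) F"
    by (intro tendsto_intros mlim assms)
  then show "((\<lambda>n. \<sigma> n * snd (mapp (G n) (X n))) \<longlongrightarrow> snd (mapp Gi (a, b))) F"
    by (simp add: mapp_def algebra_simps)
qed

lemma sol_map:
  assumes "is_sol Ma z X" "\<And>n. mmul (G n) (Ma z n) = mmul (Mb z n) (G (n+1))"
  shows "is_sol Mb z (\<lambda>n. sm c (mapp (G n) (X n)))"
  unfolding is_sol_bsol bsol_def
proof
  fix n
  have X: "X n = mapp (Ma z n) (X (n+1))" using assms(1) unfolding is_sol_bsol bsol_def by blast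
  have "sm c (mapp (G n) (X n)) = sm c (mapp (mmul (G n) (Ma z n)) (X (n+1)))"
    by (subst X) (simp add: mapp_mmul)
  also have "\<dots> = mapp (Mb z n) (sm c (mapp (G (n+1)) (X (n+1))))"
    by (simp add: assms(2) mapp_mmul mapp_sm)
  finally show "sm c (mapp (G n) (X n)) = mapp (Mb z n) (sm c (mapp (G (n + 1)) (X (n + 1))))" .
qed

lemma TR:
  assumes ex: "\<exists>!X. JP Ma z F \<sigma> e1 e2 X" and X0: "JP Ma z F \<sigma> e1 e2 X0"
    and g1: "\<And>n. mmul (G n) (Ma z n) = mmul (Mb z n) (G (n+1))"
    and hg: "\<And>n. mmul (H n) (G n) = idm" and gh: "\<And>n. mmul (G n) (H n) = idm"
    and Glim: "(G \<longlongrightarrow> Gi) F" and Hlim: "(H \<longlongrightarrow> Hi) F"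
    and Ge: "mapp Gi (e1, e2) = sm c (e1, e2)" and He: "mapp Hi (e1, e2) = sm (1/c) (e1, e2)" and c: "c \<noteq> 0"
  shows "\<exists>!Y. JP Mb z F \<sigma> e1 e2 Y" and "JP Mb z F \<sigma> e1 e2 (\<lambda>n. sm (1/c) (mapp (G n) (X0 n)))"
proof -
  define Y0 where "Y0 n = sm (1/c) (mapp (G n) (X0 n))" for n
  have JY0: "JP Mb z F \<sigma> e1 e2 Y0"
  proof -
    have sol: "is_sol Mb z Y0" unfolding Y0_def by (rule sol_map[where G=G and Ma=Ma]) (use X0 g1 in \<open>auto simp: JP_def\<close>)
    have l: "((\<lambda>n. \<sigma> n * fst (mapp (G n) (X0 n))) \<longlongrightarrow> fst (mapp Gi (e1, e2))) F"
            "((\<lambda>n. \<sigma> n * snd (mapp (G n) (X0 n))) \<longlongrightarrow> snd (mapp Gi (e1, e2))) F"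
      using X0 unfolding JP_def by (intro SL[OF Glim]; blast)+
    have "((\<lambda>n. (1/c) * (\<sigma> n * fst (mapp (G n) (X0 n)))) \<longlongrightarrow> (1/c) * fst (mapp Gi (e1, e2))) F"
         "((\<lambda>n. (1/c) * (\<sigma> n * snd (mapp (G n) (X0 n)))) \<longlongrightarrow> (1/c) * snd (mapp Gi (e1, e2))) F"
      by (intro tendsto_intros l)+
    then show ?thesis using sol c unfolding JP_def Y0_def Ge by (simp add: sm_def ac_simps)
  qed
  then show "JP Mb z F \<sigma> e1 e2 (\<lambda>n. sm (1/c) (mapp (G n) (X0 n)))" unfolding Y0_def .
  have hm: "mmul (Ma z n) (H (n+1)) = mmul (H n) (Mb z n)" for n
  proof -
    have "mmul (H n) (Mb z n) = mmul (H n) (mmul (Mb z n) (mmul (G (n+1)) (H (n+1))))"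
      by (simp add: gh)
    also have "\<dots> = mmul (mmul (H n) (G n)) (mmul (Ma z n) (H (n+1)))"
    proof -
      have g1': "mmul (G n) (mmul (Ma z n) K) = mmul (Mb z n) (mmul (G (n+1)) K)" for K
        by (simp add: mmul_assoc[symmetric] g1)
      show ?thesis by (simp add: mmul_assoc g1')
    qed
    also have "\<dots> = mmul (Ma z n) (H (n+1))" by (simp add: hg)
    finally show ?thesis by simp
  qed
  have uq: "Y = Y0" if JY: "JP Mb z F \<sigma> e1 e2 Y" for Y
  proof -
    define Z where "Z n = sm c (mapp (H n) (Y n))" for n
    have sol: "is_sol Ma z Z" unfolding Z_def
      by (rule sol_map[where G=H and Ma=Mb]) (use JY hm in \<open>auto simp: JP_def\<close>)
    have l: "((\<lambda>n. \<sigma> n * fst (mapp (H n) (Y n))) \<longlongrightarrow> fst (mapp Hi (e1, e2))) F"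
            "((\<lambda>n. \<sigma> n * snd (mapp (H n) (Y n))) \<longlongrightarrow> snd (mapp Hi (e1, e2))) F"
      using JY unfolding JP_def by (intro SL[OF Hlim]; blast)+
    have "((\<lambda>n. c * (\<sigma> n * fst (mapp (H n) (Y n)))) \<longlongrightarrow> c * fst (mapp Hi (e1, e2))) F"
         "((\<lambda>n. c * (\<sigma> n * snd (mapp (H n) (Y n)))) \<longlongrightarrow> c * snd (mapp Hi (e1, e2))) F"
      by (intro tendsto_intros l)+
    then have "JP Ma z F \<sigma> e1 e2 Z" using sol c unfolding JP_def Z_def He by (simp add: sm_def ac_simps)
    then have "Z = X0" using ex X0 by blast
    show "Y = Y0"
    proof
      fix n
      have "Y n = mapp (mmul (G n) (H n)) (Y n)" by (simp add: gh)
      also have "\<dots> = mapp (G n) (sm (1/c) (Z n))" using c by (simp add: mapp_mmul Z_def sm_sm)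
      also have "\<dots> = Y0 n" by (simp add: \<open>Z = X0\<close> Y0_def mapp_sm)
      finally show "Y n = Y0 n" .
    qed
  qed
  show "\<exists>!Y. JP Mb z F \<sigma> e1 e2 Y" using JY0 uq by blast
qed

lemma bdd_mult_zero:
  fixes a b :: "'a \<Rightarrow> complex"
  assumes "(a \<longlongrightarrow> 0) F" "eventually (\<lambda>n. cmod (b n) \<le> C) F"
  shows "((\<lambda>n. a n * b n) \<longlongrightarrow> 0) F"
proof (rule tendsto_0_le[OF assms(1), of _ C])
  show "eventually (\<lambda>n. norm (a n * b n) \<le> norm (a n) * C) F"
    using assms(2) by eventually_elim (simp add: norm_mult mult_left_mono)
qed

lemma OE_snd:
  assumes "(G \<longlongrightarrow> Gi) F" "m21 Gi = 0" "eventually (\<lambda>n. cmod (\<sigma> n * fst (X n)) \<le> C) F"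
    "((\<lambda>n. \<sigma> n * snd (X n)) \<longlongrightarrow> L) F"
  shows "((\<lambda>n. \<sigma> n * snd (sm (1/c) (mapp (G n) (X n)))) \<longlongrightarrow> m22 Gi * L / c) F"
proof -
  have "((\<lambda>n. m21 (G n) * (\<sigma> n * fst (X n))) \<longlongrightarrow> 0) F"
    using mlim(3)[OF assms(1)] assms(2,3) by (intro bdd_mult_zero[where C=C]) auto
  then have "((\<lambda>n. (1/c) * (m21 (G n) * (\<sigma> n * fst (X n)) + m22 (G n) * (\<sigma> n * snd (X n)))) \<longlongrightarrow> (1/c) * (0 + m22 Gi * L)) F"
    by (intro tendsto_intros mlim assms)
  then show ?thesis by (simp add: sm_def mapp_def algebra_simps)
qed

lemma OE_fst:
  assumes "(G \<longlongrightarrow> Gi) F" "m12 Gi = 0" "eventually (\<lambda>n. cmod (\<sigma> n * snd (X n)) \<le> C) F"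
    "((\<lambda>n. \<sigma> n * fst (X n)) \<longlongrightarrow> L) F"
  shows "((\<lambda>n. \<sigma> n * fst (sm (1/c) (mapp (G n) (X n)))) \<longlongrightarrow> m11 Gi * L / c) F"
proof -
  have "((\<lambda>n. m12 (G n) * (\<sigma> n * snd (X n))) \<longlongrightarrow> 0) F"
    using mlim(2)[OF assms(1)] assms(2,3) by (intro bdd_mult_zero[where C=C]) auto
  then have "((\<lambda>n. (1/c) * (m11 (G n) * (\<sigma> n * fst (X n)) + m12 (G n) * (\<sigma> n * snd (X n)))) \<longlongrightarrow> (1/c) * (m11 Gi * L + 0)) F"
    by (intro tendsto_intros mlim assms)
  then show ?thesis by (simp add: sm_def mapp_def algebra_simps)
qed

lemma rd_sum_top:
  fixes h :: "int \<Rightarrow> complex"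
  assumes "((\<lambda>n. of_int \<bar>n\<bar> ^ 2 * h n) \<longlongrightarrow> 0) at_top"
  shows "summable (\<lambda>i. cmod (h (n + int i)))"
proof -
  have "((\<lambda>i. of_int \<bar>n + int i\<bar> ^ 2 * h (n + int i)) \<longlongrightarrow> 0) sequentially"
    using filterlim_compose[OF assms fl_top[of n]] by simp
  from tendstoD[OF this, of 1]
  obtain N where N: "\<And>i. i \<ge> N \<Longrightarrow> cmod (of_int \<bar>n + int i\<bar> ^ 2 * h (n + int i)) < 1"
    by (auto simp: eventually_sequentially dist_norm)
  have "summable (\<lambda>i. 4 * inverse (of_nat i ^ 2 :: real))"
    by (intro summable_mult inverse_power_summable) auto
  then show ?thesis
  proof (rule summable_comparison_test'[where N="max N (nat (2 * \<bar>n\<bar> + 1))"])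
    fix i assume i: "max N (nat (2 * \<bar>n\<bar> + 1)) \<le> i"
    define a where "a = cmod (complex_of_int \<bar>n + int i\<bar>)"
    define b where "b = cmod (h (n + int i))"
    have "N \<le> i" using i by simp
    have ab: "a ^ 2 * b < 1" using N[OF \<open>N \<le> i\<close>] unfolding a_def b_def by (simp only: norm_mult norm_power)
    have "a = real_of_int \<bar>n + int i\<bar>" unfolding a_def by (simp only: norm_of_int)
    then have ia: "real i / 2 \<le> a" using i by linarith
    have ipos: "real i > 0" using i by linarith
    have b0: "b \<ge> 0" by (simp add: b_def)
    have "(real i / 2) ^ 2 \<le> a ^ 2" by (rule power_mono[OF ia]) (use ipos in simp)
    then have "b * (real i / 2) ^ 2 \<le> b * a ^ 2" by (rule mult_left_mono[OF _ b0])
    then have "b * (real i ^ 2 / 4) < 1" using ab by (simp add: power_divide mult.commute)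
    then have "b \<le> 4 * inverse (real i ^ 2)" using ipos by (simp add: field_simps)
    then show "norm (cmod (h (n + int i))) \<le> 4 * inverse (of_nat i ^ 2)" by (simp add: b_def)
  qed
qed

lemma rd_sum_bot:
  fixes h :: "int \<Rightarrow> complex"
  assumes "((\<lambda>n. of_int \<bar>n\<bar> ^ 2 * h n) \<longlongrightarrow> 0) at_bot"
  shows "summable (\<lambda>i. cmod (h (n - int i)))"
proof -
  have "((\<lambda>m. of_int \<bar>m\<bar> ^ 2 * h (-m)) \<longlongrightarrow> 0) at_top"
    using assms unfolding tendsto_bot_mirror by simp
  from rd_sum_top[OF this, of "-n"] show ?thesis by simp
qed

lemma fl_shift_top: "filterlim (\<lambda>n::int. n + c) at_top at_top"
  unfolding filterlim_at_top
proof
  fix Z :: int show "eventually (\<lambda>n. Z \<le> n + c) at_top"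
    using eventually_ge_at_top[of "Z - c"] by eventually_elim linarith
qed

lemma fl_shift_bot: "filterlim (\<lambda>n::int. n + c) at_bot at_bot"
  unfolding filterlim_at_bot
proof
  fix Z :: int show "eventually (\<lambda>n. n + c \<le> Z) at_bot"
    using eventually_le_at_bot[of "Z - c"] by eventually_elim linarith
qed

definition rd2 :: "(int \<Rightarrow> complex) \<Rightarrow> bool" where
  "rd2 h \<longleftrightarrow> ((\<lambda>n. of_int \<bar>n\<bar> ^ 2 * h n) \<longlongrightarrow> 0) at_top \<and> ((\<lambda>n. of_int \<bar>n\<bar> ^ 2 * h n) \<longlongrightarrow> 0) at_bot"

lemma rapid_rd2: "rapid_decay q \<Longrightarrow> rd2 q"
  unfolding rapid_decay_def rd2_def by blast

lemma rapid_zero: assumes "rapid_decay q" shows "(q \<longlongrightarrow> 0) at_top" "(q \<longlongrightarrow> 0) at_bot"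
  using assms[unfolded rapid_decay_def, rule_format, of 0] by simp_all

lemma rd2_mult:
  assumes "rd2 q" "(r \<longlongrightarrow> 0) at_top" "(r \<longlongrightarrow> 0) at_bot"
  shows "rd2 (\<lambda>n. q n * r n)"
proof -
  have "((\<lambda>n. (of_int \<bar>n\<bar> ^ 2 * q n) * r n) \<longlongrightarrow> 0 * 0) at_top"
    using assms unfolding rd2_def by (intro tendsto_mult) auto
  moreover have "((\<lambda>n. (of_int \<bar>n\<bar> ^ 2 * q n) * r n) \<longlongrightarrow> 0 * 0) at_bot"
    using assms unfolding rd2_def by (intro tendsto_mult) auto
  ultimately show ?thesis unfolding rd2_def by (simp add: ac_simps)
qed

lemma zero_shift:
  fixes r :: "int \<Rightarrow> complex"
  assumes "(r \<longlongrightarrow> 0) at_top" "(r \<longlongrightarrow> 0) at_bot"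
  shows "((\<lambda>n. r (n + c)) \<longlongrightarrow> 0) at_top" "((\<lambda>n. r (n + c)) \<longlongrightarrow> 0) at_bot"
  using filterlim_compose[OF assms(1) fl_shift_top] filterlim_compose[OF assms(2) fl_shift_bot] by auto

lemma rd2_sum: assumes "rd2 h"
  shows "summable (\<lambda>i. cmod (h (n + int i)))" "summable (\<lambda>i. cmod (h (n - int i)))"
  using assms unfolding rd2_def by (auto intro: rd_sum_top rd_sum_bot)

lemma prod_rev_interval: "(\<Prod>i\<le>k. f (n - int i)) = (\<Prod>j\<in>{n - int k..n}. f j)"
proof (induction k)
  case 0 then show ?case by simp
next
  case (Suc k)
  have "{n - int (Suc k)..n} = insert (n - int (Suc k)) {n - int k..n}" by auto
  moreover have "n - int (Suc k) \<notin> {n - int k..n}" by auto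
  ultimately show ?case using Suc by (simp add: mult.commute)
qed

lemma PR:
  fixes f :: "int \<Rightarrow> complex"
  assumes nz: "\<And>j. f j \<noteq> 0" and st: "\<And>n. summable (\<lambda>i. cmod (f (n + int i) - 1))"
    and sb: "\<And>n. summable (\<lambda>i. cmod (f (n - int i) - 1))"
    and P: "\<And>n. P n = Lim at_bot (\<lambda>m. \<Prod>j\<in>{m..n}. f j)"
  shows "\<And>n. P n \<noteq> 0" "\<And>n. P n = P (n-1) * f n"
    "\<exists>L. L \<noteq> 0 \<and> (P \<longlongrightarrow> L) at_top" "\<exists>L. L \<noteq> 0 \<and> (P \<longlongrightarrow> L) at_bot"
proof -
  have cp: "convergent_prod g" if "summable (\<lambda>i. cmod (g i - 1))" for g :: "nat \<Rightarrow> complex"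
    by (intro abs_convergent_prod_imp_convergent_prod summable_imp_abs_convergent_prod that)
  have lim: "((\<lambda>m. \<Prod>j\<in>{m..n}. f j) \<longlongrightarrow> prodinf (\<lambda>i. f (n - int i))) at_bot" for n
  proof -
    have "(\<lambda>k. \<Prod>i\<le>k. f (n - int i)) \<longlonglongrightarrow> prodinf (\<lambda>i. f (n - int i))"
      by (intro convergent_prod_LIMSEQ cp sb)
    then show ?thesis unfolding tendsto_bot_iff[of _ _ n] prod_rev_interval .
  qed
  have Pn: "P n = prodinf (\<lambda>i. f (n - int i))" for n
    unfolding P by (intro tendsto_Lim lim) simp
  show nz': "P n \<noteq> 0" for n unfolding Pn by (intro prodinf_nonzero cp sb nz)
  show rec: "P n = P (n-1) * f n" for n
  proof -
    have "((\<lambda>m. (\<Prod>j\<in>{m..n-1}. f j) * f n) \<longlongrightarrow> P (n-1) * f n) at_bot"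
      unfolding Pn by (intro tendsto_intros lim)
    moreover have "eventually (\<lambda>m. (\<Prod>j\<in>{m..n-1}. f j) * f n = (\<Prod>j\<in>{m..n}. f j)) at_bot"
      using eventually_le_at_bot[of "n-1"]
    proof eventually_elim
      case (elim m)
      have "{m..n} = insert n {m..n-1}" using elim by auto
      then show ?case by (simp add: mult.commute)
    qed
    ultimately have "((\<lambda>m. \<Prod>j\<in>{m..n}. f j) \<longlongrightarrow> P (n-1) * f n) at_bot"
      by (rule Lim_transform_eventually)
    then show ?thesis using lim[of n] unfolding Pn by (intro tendsto_unique[of at_bot]) auto
  qed
  show "\<exists>L. L \<noteq> 0 \<and> (P \<longlongrightarrow> L) at_top"
  proof -
    have eq: "P (0 + int k) = P 0 * (\<Prod>i<k. f (1 + int i))" for k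
    proof (induction k)
      case 0 then show ?case by simp
    next
      case (Suc k)
      have "P (0 + int (Suc k)) = P (int k) * f (1 + int k)" using rec[of "int (Suc k)"] by simp
      then show ?case using Suc by (simp add: mult.assoc)
    qed
    have "(\<lambda>k. \<Prod>i\<le>k. f (1 + int i)) \<longlonglongrightarrow> prodinf (\<lambda>i. f (1 + int i))"
      by (intro convergent_prod_LIMSEQ cp st)
    then have "(\<lambda>k. \<Prod>i<k. f (1 + int i)) \<longlonglongrightarrow> prodinf (\<lambda>i. f (1 + int i))"
      using LIMSEQ_imp_Suc[of "\<lambda>k. \<Prod>i<k. f (1 + int i)"] by (simp add: lessThan_Suc_atMost)
    then have "(\<lambda>k. P (0 + int k)) \<longlonglongrightarrow> P 0 * prodinf (\<lambda>i. f (1 + int i))"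
      unfolding eq by (intro tendsto_intros)
    then have "(P \<longlongrightarrow> P 0 * prodinf (\<lambda>i. f (1 + int i))) at_top"
      unfolding tendsto_top_iff[of _ _ 0] .
    moreover have "P 0 * prodinf (\<lambda>i. f (1 + int i)) \<noteq> 0"
      using nz'[of 0] prodinf_nonzero[OF cp[OF st[of 1]] nz] by simp
    ultimately show ?thesis by blast
  qed
  show "\<exists>L. L \<noteq> 0 \<and> (P \<longlongrightarrow> L) at_bot"
  proof -
    have eq: "P (0 - int k) * (\<Prod>i<k. f (0 - int i)) = P 0" for k
    proof (induction k)
      case 0 then show ?case by simp
    next
      case (Suc k)
      have e1: "(0::int) - int (Suc k) = (0 - int k) - 1" by simp
      have "P (0 - int k) = P (0 - int (Suc k)) * f (0 - int k)" unfolding e1 by (rule rec)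
      then show ?case using Suc by (simp add: ac_simps)
    qed
    have pnz: "(\<Prod>i<k. f (0 - int i)) \<noteq> 0" for k using nz by (simp add: prod_zero_iff)
    have eq': "P (0 - int k) = P 0 / (\<Prod>i<k. f (0 - int i))" for k
      using eq[of k] pnz[of k] by (simp add: field_simps)
    have "(\<lambda>k. \<Prod>i\<le>k. f (0 - int i)) \<longlonglongrightarrow> prodinf (\<lambda>i. f (0 - int i))"
      by (intro convergent_prod_LIMSEQ cp sb)
    then have "(\<lambda>k. \<Prod>i<k. f (0 - int i)) \<longlonglongrightarrow> prodinf (\<lambda>i. f (0 - int i))"
      using LIMSEQ_imp_Suc[of "\<lambda>k. \<Prod>i<k. f (0 - int i)"] by (simp add: lessThan_Suc_atMost)
    moreover have pi: "prodinf (\<lambda>i. f (0 - int i)) \<noteq> 0" by (intro prodinf_nonzero cp sb nz)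
    ultimately have "(\<lambda>k. P (0 - int k)) \<longlonglongrightarrow> P 0 / prodinf (\<lambda>i. f (0 - int i))"
      unfolding eq' by (intro tendsto_intros)
    then have "(P \<longlongrightarrow> P 0 / prodinf (\<lambda>i. f (0 - int i))) at_bot"
      unfolding tendsto_bot_iff[of _ _ 0] .
    moreover have "P 0 / prodinf (\<lambda>i. f (0 - int i)) \<noteq> 0" using nz'[of 0] pi by simp
    ultimately show ?thesis by blast
  qed
qed

lemma gaugeU_alg:
  fixes z qn rn rn1 Dm1 Em1 :: complex
  assumes a: "1 - qn*rn \<noteq> 0" and b: "1 + qn*rn1 \<noteq> 0" and "Dm1 \<noteq> 0" "Em1 \<noteq> 0" "z \<noteq> 0"
  shows "mmul (z*Em1, 0, -z*rn*Dm1, (z - inverse z)*Dm1) (z, (z - inverse z)*qn, z*rn, inverse z + (z - inverse z)*qn*rn)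
       = mmul (z, z*(qn*Em1/(Dm1 * (1 - qn*rn))), inverse z * ((-rn + rn1 - qn*rn*rn1)*Dm1/(Em1 * (1 + qn*rn1))), inverse z)
              (z*(Em1 * (1 + qn*rn1)), 0, -z*rn1*(Dm1 * (1 - qn*rn)), (z - inverse z)*(Dm1 * (1 - qn*rn)))"
  using assms unfolding mmul_def
  apply (simp add: prod_eq_iff)
  apply (intro conjI)
  apply (simp_all add: field_simps)
  done

lemma gaugeP_alg:
  fixes z qn qn1 rn rn1 Dn Em1 :: complex
  assumes a: "1 - qn1*rn1 \<noteq> 0" and b: "1 + qn*rn1 \<noteq> 0" "Em1 \<noteq> 0" "Dn \<noteq> 0" "z \<noteq> 0"
  shows "mmul (Em1*(1 - qn*rn), Em1*qn, -Dn*rn, Dn) (z, (z - inverse z)*qn, z*rn, inverse z + (z - inverse z)*qn*rn)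
       = mmul (z, z*((qn - qn1 - qn*qn1*rn1)*Em1/(Dn * (1 - qn1*rn1))), inverse z * (rn1*Dn/(Em1 * (1 + qn*rn1))), inverse z)
              ((Em1 * (1 + qn*rn1))*(1 - qn1*rn1), (Em1 * (1 + qn*rn1))*qn1, -(Dn * (1 - qn1*rn1))*rn1, Dn * (1 - qn1*rn1))"
  using assms unfolding mmul_def
  apply (simp add: prod_eq_iff)
  apply (intro conjI)
  apply (simp_all add: field_simps)
  done

lemma mn_le: "cmod (m11 A) + cmod (m21 A) \<le> t \<Longrightarrow> cmod (m12 A) + cmod (m22 A) \<le> t \<Longrightarrow> mn A \<le> t"
  by (simp add: mn_def)

lemma nm1: "cmod t \<le> 1 \<Longrightarrow> cmod (t * x) \<le> cmod x"
  by (simp add: norm_mult mult_left_le_one_le)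
lemma nm2: assumes "cmod t \<le> 1" shows "cmod ((t - 1) * x) \<le> 2 * cmod x" "cmod ((1 - t) * x) \<le> 2 * cmod x"
proof -
  have "cmod (t - 1) \<le> 2" "cmod (1 - t) \<le> 2"
    using norm_triangle_ineq4[of t 1] norm_triangle_ineq4[of 1 t] assms by auto
  then show "cmod ((t - 1) * x) \<le> 2 * cmod x" "cmod ((1 - t) * x) \<le> 2 * cmod x"
    by (auto simp: norm_mult intro: mult_right_mono)
qed
lemma nm3: "cmod t \<le> 1 \<Longrightarrow> cmod (t + y) \<le> 1 + cmod y"
  using norm_triangle_ineq[of t y] by linarith

lemma bnd:
  fixes t a b :: complex
  assumes t: "cmod t \<le> 1"
  defines "W \<equiv> 2 * cmod a + 2 * cmod b + 2 * cmod (a * b)"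
  shows "mn (t, (t-1)*a, t*b, 1 + (t-1)*a*b) \<le> 1 + W"
    and "mn (1 + (t-1)*a*b, -((t-1)*a), -(t*b), t) \<le> 1 + W"
    and "mn (1, (1-t)*a, b, t + (1-t)*a*b) \<le> 1 + W"
    and "mn (t + (1-t)*a*b, -((1-t)*a), -b, 1) \<le> 1 + W"
    and "nv (mapp (t, (t-1)*a, t*b, 1 + (t-1)*a*b) (0, 1) - (0, 1)) \<le> W"
    and "nv (mapp (1 + (t-1)*a*b, -((t-1)*a), -(t*b), t) (1, 0) - (1, 0)) \<le> W"
    and "nv (mapp (1, (1-t)*a, b, t + (1-t)*a*b) (1, 0) - (1, 0)) \<le> W"
    and "nv (mapp (t + (1-t)*a*b, -((1-t)*a), -b, 1) (0, 1) - (0, 1)) \<le> W"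
    and "cmod (t*b) + cmod (1 + (t-1)*a*b - 1) \<le> W"
    and "cmod (1 + (t-1)*a*b - 1) + cmod (-((t-1)*a)) \<le> W"
    and "cmod (1 - 1) + cmod ((1-t)*a) \<le> W"
    and "cmod (-b) + cmod (1 - 1) \<le> W"
proof -
  have A: "cmod (t * b) \<le> cmod b" by (rule nm1[OF t])
  have B: "cmod ((t-1)*a) \<le> 2 * cmod a" "cmod ((1-t)*a) \<le> 2 * cmod a" using nm2[OF t] by auto
  have C: "cmod ((t-1)*a*b) \<le> 2 * cmod (a*b)" "cmod ((1-t)*a*b) \<le> 2 * cmod (a*b)"
    using nm2[OF t, of "a*b"] by (auto simp: mult.assoc)
  have D: "cmod (1 + (t-1)*a*b) \<le> 1 + 2 * cmod (a*b)"
    using norm_triangle_ineq[of 1 "(t-1)*a*b"] C by simp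
  have E: "cmod (t + (1-t)*a*b) \<le> 1 + 2 * cmod (a*b)"
    using nm3[OF t, of "(1-t)*a*b"] C by simp
  have nn: "cmod a \<ge> 0" "cmod b \<ge> 0" "cmod (a*b) \<ge> 0" by simp_all
  show "mn (t, (t-1)*a, t*b, 1 + (t-1)*a*b) \<le> 1 + W"
    using A B C D t nn by (intro mn_le; simp only: mcomp W_def norm_minus_cancel norm_one; linarith)
  show "mn (1 + (t-1)*a*b, -((t-1)*a), -(t*b), t) \<le> 1 + W"
    using A B C D t nn by (intro mn_le; simp only: mcomp W_def norm_minus_cancel norm_one; linarith)
  show "mn (1, (1-t)*a, b, t + (1-t)*a*b) \<le> 1 + W"
    using A B C E t nn by (intro mn_le; simp only: mcomp W_def norm_minus_cancel norm_one; linarith)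
  show "mn (t + (1-t)*a*b, -((1-t)*a), -b, 1) \<le> 1 + W"
    using A B C E t nn by (intro mn_le; simp only: mcomp W_def norm_minus_cancel norm_one; linarith)
  show "nv (mapp (t, (t-1)*a, t*b, 1 + (t-1)*a*b) (0, 1) - (0, 1)) \<le> W"
    using B C nn by (simp add: nv_def mapp_def W_def; use norm_ge_zero[of a] norm_ge_zero[of b] norm_ge_zero[of "a*b"] in linarith)
  show "nv (mapp (1 + (t-1)*a*b, -((t-1)*a), -(t*b), t) (1, 0) - (1, 0)) \<le> W"
    using A C nn by (simp add: nv_def mapp_def W_def; use norm_ge_zero[of a] norm_ge_zero[of b] norm_ge_zero[of "a*b"] in linarith)
  show "nv (mapp (1, (1-t)*a, b, t + (1-t)*a*b) (1, 0) - (1, 0)) \<le> W"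
    using nn by (simp add: nv_def mapp_def W_def; use norm_ge_zero[of a] norm_ge_zero[of b] norm_ge_zero[of "a*b"] in linarith)
  show "nv (mapp (t + (1-t)*a*b, -((1-t)*a), -b, 1) (0, 1) - (0, 1)) \<le> W"
    using B nn by (simp add: nv_def mapp_def W_def; use norm_ge_zero[of a] norm_ge_zero[of b] norm_ge_zero[of "a*b"] in linarith)
  show "cmod (t*b) + cmod (1 + (t-1)*a*b - 1) \<le> W"
    using A C nn by (simp add: W_def; use norm_ge_zero[of a] norm_ge_zero[of b] norm_ge_zero[of "a*b"] in linarith)
  show "cmod (1 + (t-1)*a*b - 1) + cmod (-((t-1)*a)) \<le> W"
    using B C nn by (simp add: W_def; use norm_ge_zero[of a] norm_ge_zero[of b] norm_ge_zero[of "a*b"] in linarith)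
  show "cmod (1 - 1) + cmod ((1-t)*a) \<le> W"
    using B nn by (simp add: W_def; use norm_ge_zero[of a] norm_ge_zero[of b] norm_ge_zero[of "a*b"] in linarith)
  show "cmod (-b) + cmod (1 - 1) \<le> W"
    using nn by (simp add: W_def; use norm_ge_zero[of a] norm_ge_zero[of b] norm_ge_zero[of "a*b"] in linarith)
qed

definition Sinv :: "(int \<Rightarrow> complex) \<Rightarrow> (int \<Rightarrow> complex) \<Rightarrow> complex \<Rightarrow> int \<Rightarrow> complex \<times> complex \<times> complex \<times> complex" where
  "Sinv q r z n = (inverse z + (z - inverse z) * q n * r n, -((z - inverse z) * q n), -(z * r n), z)"

definition MQr :: "(int \<Rightarrow> complex) \<Rightarrow> (int \<Rightarrow> complex) \<Rightarrow> system" where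
  "MQr q r = (\<lambda>z m. Sinv q r z (-m-1))"

lemma Sinv_inv: assumes "z \<noteq> 0"
  shows "mmul (sysQ q r z n) (Sinv q r z n) = idm" "mmul (Sinv q r z n) (sysQ q r z n) = idm"
  using assms by (simp_all add: mmul_def sysQ_def Sinv_def idm_def field_simps)

lemma smat_forms: assumes z: "z \<noteq> 0"
  shows "smat z (sysQ q r z n) = (z^2, (z^2-1)*q n, z^2*r n, 1 + (z^2-1)*q n*r n)"
    and "smat z (Sinv q r z n) = (1 + (z^2-1)*q n*r n, -((z^2-1)*q n), -(z^2*r n), z^2)"
    and "smat (1/z) (sysQ q r z n) = (1, (1-(1/z)^2)*q n, r n, (1/z)^2 + (1-(1/z)^2)*q n*r n)"
    and "smat (1/z) (Sinv q r z n) = ((1/z)^2 + (1-(1/z)^2)*q n*r n, -((1-(1/z)^2)*q n), -(r n), 1)"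
  using z by (simp_all add: smat_def sysQ_def Sinv_def field_simps power2_eq_square)

lemma powi_rec1: "(z::complex) \<noteq> 0 \<Longrightarrow> z powi (-n) = z * z powi (-(n+1))"
  using power_int_add_1'[of z "-(n+1)"] by simp
lemma powi_rec2: "(z::complex) \<noteq> 0 \<Longrightarrow> z powi n = (1/z) * z powi (n+1)"
  using power_int_add_1'[of z n] by simp
lemma powi_nz: "(z::complex) \<noteq> 0 \<Longrightarrow> z powi n \<noteq> 0"
  by (simp add: power_int_not_zero)

locale QR =
  fixes q r :: "int \<Rightarrow> complex"
  assumes rq: "rapid_decay q" and rr: "rapid_decay r"
    and nz1: "\<And>n. 1 - q n * r n \<noteq> 0" and nz2: "\<And>n. 1 + q n * r (n+1) \<noteq> 0"
begin

definition om :: "int \<Rightarrow> real" where "om n = 2 * cmod (q n) + 2 * cmod (r n) + 2 * cmod (q n * r n)"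

lemma om_nonneg: "om n \<ge> 0" by (simp add: om_def)

lemma q_lim: "(q \<longlongrightarrow> 0) at_top" "(q \<longlongrightarrow> 0) at_bot" using rapid_zero[OF rq] by auto
lemma r_lim: "(r \<longlongrightarrow> 0) at_top" "(r \<longlongrightarrow> 0) at_bot" using rapid_zero[OF rr] by auto
lemma rd_qr: "rd2 (\<lambda>n. q n * r n)" by (intro rd2_mult rapid_rd2 rq r_lim)
lemma rd_qr1: "rd2 (\<lambda>n. q n * r (n+1))" by (intro rd2_mult rapid_rd2 rq zero_shift r_lim)

lemma om_sum: "summable (\<lambda>i. om (n + int i))" "summable (\<lambda>i. om (n - int i))"
proof -
  note s = rd2_sum[OF rapid_rd2[OF rq]] rd2_sum[OF rapid_rd2[OF rr]] rd2_sum[OF rd_qr]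
  show "summable (\<lambda>i. om (n + int i))" unfolding om_def
    by (intro summable_add summable_mult s)
  show "summable (\<lambda>i. om (n - int i))" unfolding om_def
    by (intro summable_add summable_mult s)
qed

lemma om_sum_refl: "summable (\<lambda>i. om (-(n + int i) - 1))" "summable (\<lambda>i. om (-(n - int i) - 1))"
proof -
  have "(\<lambda>i. om (-(n + int i) - 1)) = (\<lambda>i. om ((-n-1) - int i))" by (simp add: algebra_simps)
  then show "summable (\<lambda>i. om (-(n + int i) - 1))" using om_sum(2) by simp
  have "(\<lambda>i. om (-(n - int i) - 1)) = (\<lambda>i. om ((-n-1) + int i))" by (simp add: algebra_simps)
  then show "summable (\<lambda>i. om (-(n - int i) - 1))" using om_sum(1) by simp
qed

lemma ws_psi: assumes "z \<noteq> 0" "cmod z \<le> 1"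
  shows "wsys (\<lambda>n. smat z (sysQ q r z n)) om"
proof
  have t: "cmod (z^2) \<le> 1" using assms by (simp add: norm_power power_le_one)
  show "mn (smat z (sysQ q r z m)) \<le> 1 + om m" for m
    unfolding smat_forms(1)[OF assms(1)] om_def by (rule bnd(1)[OF t])
qed (auto simp: om_nonneg om_sum)

lemma ws_phi: assumes "z \<noteq> 0" "cmod z \<le> 1"
  shows "wsys (\<lambda>m. smat z (MQr q r z m)) (\<lambda>m. om (-m-1))"
proof
  have t: "cmod (z^2) \<le> 1" using assms by (simp add: norm_power power_le_one)
  show "mn (smat z (MQr q r z m)) \<le> 1 + om (-m-1)" for m
    unfolding MQr_def smat_forms(2)[OF assms(1)] om_def by (rule bnd(2)[OF t])
qed (use om_nonneg om_sum_refl in simp_all)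

lemma ws_psib: assumes "z \<noteq> 0" "cmod z \<ge> 1"
  shows "wsys (\<lambda>n. smat (1/z) (sysQ q r z n)) om"
proof
  have t: "cmod ((1/z)^2) \<le> 1" using assms by (simp add: norm_power power_le_one norm_divide divide_le_eq_1)
  show "mn (smat (1/z) (sysQ q r z m)) \<le> 1 + om m" for m
    unfolding smat_forms(3)[OF assms(1)] om_def by (rule bnd(3)[OF t])
qed (auto simp: om_nonneg om_sum)

lemma ws_phib: assumes "z \<noteq> 0" "cmod z \<ge> 1"
  shows "wsys (\<lambda>m. smat (1/z) (MQr q r z m)) (\<lambda>m. om (-m-1))"
proof
  have t: "cmod ((1/z)^2) \<le> 1" using assms by (simp add: norm_power power_le_one norm_divide divide_le_eq_1)
  show "mn (smat (1/z) (MQr q r z m)) \<le> 1 + om (-m-1)" for m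
    unfolding MQr_def smat_forms(4)[OF assms(1)] om_def by (rule bnd(4)[OF t])
qed (use om_nonneg om_sum_refl in simp_all)

end

lemma ev_bot_bd:
  fixes X :: "int \<Rightarrow> complex \<times> complex" and \<sigma> :: "int \<Rightarrow> complex"
  assumes "\<And>n. n \<le> 0 \<Longrightarrow> nv (sm (\<sigma> n) (X n)) \<le> C"
  shows "eventually (\<lambda>n. cmod (\<sigma> n * fst (X n)) \<le> C) at_bot" "eventually (\<lambda>n. cmod (\<sigma> n * snd (X n)) \<le> C) at_bot"
proof -
  have hh: "cmod (\<sigma> n * fst (X n)) \<le> C \<and> cmod (\<sigma> n * snd (X n)) \<le> C" if "n \<le> 0" for n
  proof -
    have h: "cmod (\<sigma> n * fst (X n)) + cmod (\<sigma> n * snd (X n)) \<le> C" using assms[OF that] by (simp add: nv_def sm_def)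
    then show ?thesis using norm_ge_zero[of "\<sigma> n * fst (X n)"] norm_ge_zero[of "\<sigma> n * snd (X n)"] by linarith
  qed
  show "eventually (\<lambda>n. cmod (\<sigma> n * fst (X n)) \<le> C) at_bot"
    unfolding eventually_at_bot_linorder
  proof (intro exI[of _ 0] allI impI)
    fix n :: int assume "n \<le> 0" then show "cmod (\<sigma> n * fst (X n)) \<le> C" using hh by blast
  qed
  show "eventually (\<lambda>n. cmod (\<sigma> n * snd (X n)) \<le> C) at_bot"
    unfolding eventually_at_bot_linorder
  proof (intro exI[of _ 0] allI impI)
    fix n :: int assume "n \<le> 0" then show "cmod (\<sigma> n * snd (X n)) \<le> C" using hh by blast
  qed
qed

context QR
begin

lemma qpsi:
  assumes z: "z \<noteq> 0" "cmod z \<le> 1"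
  defines "\<psi> \<equiv> jost_psi (sysQ q r) z"
  shows "\<exists>!X. JP (sysQ q r) z at_top (\<lambda>n. z powi (-n)) 0 1 X"
    and "JP (sysQ q r) z at_top (\<lambda>n. z powi (-n)) 0 1 \<psi>"
    and "\<exists>C. eventually (\<lambda>n. cmod (z powi (-n) * fst (\<psi> n)) \<le> C) at_bot"
    and "\<exists>L. ((\<lambda>n. z powi (-n) * snd (\<psi> n)) \<longlongrightarrow> L) at_bot"
proof -
  define A where "A n = smat z (sysQ q r z n)" for n
  have ws: "wsys A om" unfolding A_def by (rule ws_psi[OF z])
  have t: "cmod (z^2) \<le> 1" using z by (simp add: norm_power power_le_one)
  have e: "nv (mapp (A m) (0, 1) - (0, 1)) \<le> om m" for m
    unfolding A_def smat_forms(1)[OF z(1)] om_def by (rule bnd(5)[OF t])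
  have snz: "z powi (-n) \<noteq> 0" for n by (rule powi_nz[OF z(1)])
  have srec: "z powi (-n) = z * z powi (-(n+1))" for n by (rule powi_rec1[OF z(1)])
  have AM: "A n = smat z (sysQ q r z n)" for n by (simp add: A_def)
  note jt = JT[where \<sigma>="\<lambda>n. z powi (-n)" and \<rho>=z and M="sysQ q r" and z=z and A=A and w=om, OF ws snz srec AM e]
  show ex: "\<exists>!X. JP (sysQ q r) z at_top (\<lambda>n. z powi (-n)) 0 1 X" by (rule jt(1))
  show J: "JP (sysQ q r) z at_top (\<lambda>n. z powi (-n)) 0 1 \<psi>"
    unfolding \<psi>_def jost_psi_JP by (rule theI'[OF ex])
  have bs: "bsol A (\<lambda>n. sm (z powi (-n)) (\<psi> n))" by (rule jt(2)[OF J])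
  have "nv (sm (z powi (-n)) (\<psi> n)) \<le> exp (wsys.Sbot om (0 - 1)) * nv (sm (z powi (-0)) (\<psi> 0))" if "n \<le> 0" for n
    using wsys.bounded_bot[OF ws bs that] by simp
  from ev_bot_bd[where \<sigma>="\<lambda>n. z powi (-n)" and X=\<psi>, OF this] show "\<exists>C. eventually (\<lambda>n. cmod (z powi (-n) * fst (\<psi> n)) \<le> C) at_bot" by blast
  have col: "cmod (m21 (A n)) + cmod (m22 (A n) - 1) \<le> om n" for n
    unfolding A_def smat_forms(1)[OF z(1)] om_def mcomp by (rule bnd(9)[OF t])
  from wsys.conv_bot_snd[OF ws bs col]
  show "\<exists>L. ((\<lambda>n. z powi (-n) * snd (\<psi> n)) \<longlongrightarrow> L) at_bot" by (simp add: sm_def)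
qed

lemma qpsib:
  assumes z: "z \<noteq> 0" "cmod z \<ge> 1"
  defines "\<psi> \<equiv> jost_psibar (sysQ q r) z"
  shows "\<exists>!X. JP (sysQ q r) z at_top (\<lambda>n. z powi n) 1 0 X"
    and "JP (sysQ q r) z at_top (\<lambda>n. z powi n) 1 0 \<psi>"
    and "\<exists>C. eventually (\<lambda>n. cmod (z powi n * snd (\<psi> n)) \<le> C) at_bot"
    and "\<exists>L. ((\<lambda>n. z powi n * fst (\<psi> n)) \<longlongrightarrow> L) at_bot"
proof -
  define A where "A n = smat (1/z) (sysQ q r z n)" for n
  have ws: "wsys A om" unfolding A_def by (rule ws_psib[OF z])
  have t: "cmod ((1/z)^2) \<le> 1" using z by (simp add: norm_power power_le_one norm_divide divide_le_eq_1)
  have e: "nv (mapp (A m) (1, 0) - (1, 0)) \<le> om m" for m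
    unfolding A_def smat_forms(3)[OF z(1)] om_def by (rule bnd(7)[OF t])
  have snz: "z powi n \<noteq> 0" for n by (rule powi_nz[OF z(1)])
  have srec: "z powi n = (1/z) * z powi (n+1)" for n by (rule powi_rec2[OF z(1)])
  have AM: "A n = smat (1/z) (sysQ q r z n)" for n by (simp add: A_def)
  note jt = JT[where \<sigma>="\<lambda>n. z powi n" and \<rho>="1/z" and M="sysQ q r" and z=z and A=A and w=om, OF ws snz srec AM e]
  show ex: "\<exists>!X. JP (sysQ q r) z at_top (\<lambda>n. z powi n) 1 0 X" by (rule jt(1))
  show J: "JP (sysQ q r) z at_top (\<lambda>n. z powi n) 1 0 \<psi>"
    unfolding \<psi>_def jost_psibar_JP by (rule theI'[OF ex])
  have bs: "bsol A (\<lambda>n. sm (z powi n) (\<psi> n))" by (rule jt(2)[OF J])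
  have "nv (sm (z powi n) (\<psi> n)) \<le> exp (wsys.Sbot om (0 - 1)) * nv (sm (z powi 0) (\<psi> 0))" if "n \<le> 0" for n
    using wsys.bounded_bot[OF ws bs that] by simp
  from ev_bot_bd[where \<sigma>="\<lambda>n. z powi n" and X=\<psi>, OF this] show "\<exists>C. eventually (\<lambda>n. cmod (z powi n * snd (\<psi> n)) \<le> C) at_bot" by blast
  have col: "cmod (m11 (A n) - 1) + cmod (m12 (A n)) \<le> om n" for n
    unfolding A_def smat_forms(3)[OF z(1)] om_def mcomp by (rule bnd(11)[OF t])
  from wsys.conv_bot_fst[OF ws bs col]
  show "\<exists>L. ((\<lambda>n. z powi n * fst (\<psi> n)) \<longlongrightarrow> L) at_bot" by (simp add: sm_def)
qed

end


lemma ev_top_bd: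
  fixes X :: "int \<Rightarrow> complex \<times> complex" and \<sigma> :: "int \<Rightarrow> complex"
  assumes "\<And>m. m \<le> 0 \<Longrightarrow> nv (sm (\<sigma> (-m)) (X (-m))) \<le> C"
  shows "eventually (\<lambda>n. cmod (\<sigma> n * fst (X n)) \<le> C) at_top" "eventually (\<lambda>n. cmod (\<sigma> n * snd (X n)) \<le> C) at_top"
proof -
  have hh: "cmod (\<sigma> n * fst (X n)) \<le> C \<and> cmod (\<sigma> n * snd (X n)) \<le> C" if "n \<ge> 0" for n
  proof -
    have h: "cmod (\<sigma> n * fst (X n)) + cmod (\<sigma> n * snd (X n)) \<le> C" using assms[of "-n"] that by (simp add: nv_def sm_def)
    then show ?thesis using norm_ge_zero[of "\<sigma> n * fst (X n)"] norm_ge_zero[of "\<sigma> n * snd (X n)"] by linarith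
  qed
  show "eventually (\<lambda>n. cmod (\<sigma> n * fst (X n)) \<le> C) at_top"
    unfolding eventually_at_top_linorder
  proof (intro exI[of _ 0] allI impI)
    fix n :: int assume "n \<ge> 0" then show "cmod (\<sigma> n * fst (X n)) \<le> C" using hh by blast
  qed
  show "eventually (\<lambda>n. cmod (\<sigma> n * snd (X n)) \<le> C) at_top"
    unfolding eventually_at_top_linorder
  proof (intro exI[of _ 0] allI impI)
    fix n :: int assume "n \<ge> 0" then show "cmod (\<sigma> n * snd (X n)) \<le> C" using hh by blast
  qed
qed

context QR
begin

lemma rfQ: assumes "z \<noteq> 0"
  shows "JP (sysQ q r) z at_bot \<sigma> e1 e2 X \<longleftrightarrow> JP (MQr q r) z at_top (\<lambda>m. \<sigma> (-m)) e1 e2 (\<lambda>m. X (-m))"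
  by (rule RF(2)[where S="Sinv q r z"]) (use Sinv_inv[OF assms] in \<open>auto simp: MQr_def\<close>)

lemma qphi:
  assumes z: "z \<noteq> 0" "cmod z \<le> 1"
  defines "\<phi> \<equiv> jost_phi (sysQ q r) z"
  shows "\<exists>!X. JP (sysQ q r) z at_bot (\<lambda>n. z powi n) 1 0 X"
    and "JP (sysQ q r) z at_bot (\<lambda>n. z powi n) 1 0 \<phi>"
    and "\<exists>C. eventually (\<lambda>n. cmod (z powi n * snd (\<phi> n)) \<le> C) at_top"
    and "\<exists>L. ((\<lambda>n. z powi n * fst (\<phi> n)) \<longlongrightarrow> L) at_top"
proof -
  define A where "A m = smat z (MQr q r z m)" for m
  have ws: "wsys A (\<lambda>m. om (-m-1))" unfolding A_def by (rule ws_phi[OF z])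
  have t: "cmod (z^2) \<le> 1" using z by (simp add: norm_power power_le_one)
  have Af: "A m = (1 + (z^2-1)*q (-m-1)*r (-m-1), -((z^2-1)*q (-m-1)), -(z^2*r (-m-1)), z^2)" for m
    unfolding A_def MQr_def smat_forms(2)[OF z(1)] ..
  have e: "nv (mapp (A m) (1, 0) - (1, 0)) \<le> om (-m-1)" for m
    unfolding Af om_def by (rule bnd(6)[OF t])
  have snz: "z powi (-n) \<noteq> 0" for n by (rule powi_nz[OF z(1)])
  have srec: "z powi (-n) = z * z powi (-(n+1))" for n by (rule powi_rec1[OF z(1)])
  have AM: "A n = smat z (MQr q r z n)" for n by (simp add: A_def)
  note jt = JT[where \<sigma>="\<lambda>n. z powi (-n)" and \<rho>=z and M="MQr q r" and z=z and A=A and w="\<lambda>m. om (-m-1)", OF ws snz srec AM e]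
  show ex: "\<exists>!X. JP (sysQ q r) z at_bot (\<lambda>n. z powi n) 1 0 X"
    by (rule ex1_mirror[OF jt(1)]) (simp add: rfQ[OF z(1)])
  show J: "JP (sysQ q r) z at_bot (\<lambda>n. z powi n) 1 0 \<phi>"
    unfolding \<phi>_def jost_phi_JP by (rule theI'[OF ex])
  have J': "JP (MQr q r) z at_top (\<lambda>m. z powi (-m)) 1 0 (\<lambda>m. \<phi> (-m))"
    using J rfQ[OF z(1)] by simp
  have bs: "bsol A (\<lambda>m. sm (z powi (-m)) (\<phi> (-m)))" by (rule jt(2)[OF J'])
  have "nv (sm (z powi (-m)) (\<phi> (-m))) \<le> exp (wsys.Sbot (\<lambda>m. om (-m-1)) (0 - 1)) * nv (sm (z powi (-0)) (\<phi> (-0)))" if "m \<le> 0" for m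
    using wsys.bounded_bot[OF ws bs that] by simp
  from ev_top_bd[where \<sigma>="\<lambda>n. z powi n" and X=\<phi>, OF this]
  show "\<exists>C. eventually (\<lambda>n. cmod (z powi n * snd (\<phi> n)) \<le> C) at_top" by blast
  have col: "cmod (m11 (A n) - 1) + cmod (m12 (A n)) \<le> om (-n-1)" for n
    unfolding Af om_def mcomp by (rule bnd(10)[OF t])
  from wsys.conv_bot_fst[OF ws bs col] obtain L where "((\<lambda>m. fst (sm (z powi (-m)) (\<phi> (-m)))) \<longlongrightarrow> L) at_bot" by blast
  then have "((\<lambda>n. z powi n * fst (\<phi> n)) \<longlongrightarrow> L) at_top"
    unfolding tendsto_bot_mirror by (simp add: sm_def)
  then show "\<exists>L. ((\<lambda>n. z powi n * fst (\<phi> n)) \<longlongrightarrow> L) at_top" by blast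
qed

lemma qphib:
  assumes z: "z \<noteq> 0" "cmod z \<ge> 1"
  defines "\<phi> \<equiv> jost_phibar (sysQ q r) z"
  shows "\<exists>!X. JP (sysQ q r) z at_bot (\<lambda>n. z powi (-n)) 0 1 X"
    and "JP (sysQ q r) z at_bot (\<lambda>n. z powi (-n)) 0 1 \<phi>"
    and "\<exists>C. eventually (\<lambda>n. cmod (z powi (-n) * fst (\<phi> n)) \<le> C) at_top"
    and "\<exists>L. ((\<lambda>n. z powi (-n) * snd (\<phi> n)) \<longlongrightarrow> L) at_top"
proof -
  define A where "A m = smat (1/z) (MQr q r z m)" for m
  have ws: "wsys A (\<lambda>m. om (-m-1))" unfolding A_def by (rule ws_phib[OF z])
  have t: "cmod ((1/z)^2) \<le> 1" using z by (simp add: norm_power power_le_one norm_divide divide_le_eq_1)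
  have Af: "A m = ((1/z)^2 + (1-(1/z)^2)*q (-m-1)*r (-m-1), -((1-(1/z)^2)*q (-m-1)), -(r (-m-1)), 1)" for m
    unfolding A_def MQr_def smat_forms(4)[OF z(1)] ..
  have e: "nv (mapp (A m) (0, 1) - (0, 1)) \<le> om (-m-1)" for m
    unfolding Af om_def by (rule bnd(8)[OF t])
  have snz: "z powi (- (- n)) \<noteq> 0" for n by (rule powi_nz[OF z(1)])
  have srec: "z powi (- (- n)) = (1/z) * z powi (- (- (n+1)))" for n unfolding minus_minus by (rule powi_rec2[OF z(1)])
  have AM: "A n = smat (1/z) (MQr q r z n)" for n by (simp add: A_def)
  note jt = JT[where \<sigma>="\<lambda>n. z powi (- (- n))" and \<rho>="1/z" and M="MQr q r" and z=z and A=A and w="\<lambda>m. om (-m-1)", OF ws snz srec AM e]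
  show ex: "\<exists>!X. JP (sysQ q r) z at_bot (\<lambda>n. z powi (-n)) 0 1 X"
    by (rule ex1_mirror[OF jt(1)]) (rule rfQ[OF z(1)])
  show J: "JP (sysQ q r) z at_bot (\<lambda>n. z powi (-n)) 0 1 \<phi>"
    unfolding \<phi>_def jost_phibar_JP by (rule theI'[OF ex])
  have J': "JP (MQr q r) z at_top (\<lambda>m. z powi (- (- m))) 0 1 (\<lambda>m. \<phi> (-m))"
    using J rfQ[OF z(1), where \<sigma>="\<lambda>n. z powi (-n)"] by simp
  have bs: "bsol A (\<lambda>m. sm (z powi (- (- m))) (\<phi> (-m)))" by (rule jt(2)[OF J'])
  have "nv (sm (z powi (- (- m))) (\<phi> (-m))) \<le> exp (wsys.Sbot (\<lambda>m. om (-m-1)) (0 - 1)) * nv (sm (z powi (- (- 0))) (\<phi> (-0)))" if "m \<le> 0" for m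
    using wsys.bounded_bot[OF ws bs that] by simp
  from ev_top_bd[where \<sigma>="\<lambda>n. z powi (-n)" and X=\<phi>, OF this]
  show "\<exists>C. eventually (\<lambda>n. cmod (z powi (-n) * fst (\<phi> n)) \<le> C) at_top" by blast
  have col: "cmod (m21 (A n)) + cmod (m22 (A n) - 1) \<le> om (-n-1)" for n
    unfolding Af om_def mcomp by (rule bnd(12)[OF t])
  from wsys.conv_bot_snd[OF ws bs col] obtain L where "((\<lambda>m. snd (sm (z powi (- (- m))) (\<phi> (-m)))) \<longlongrightarrow> L) at_bot" by blast
  then have "((\<lambda>n. z powi (-n) * snd (\<phi> n)) \<longlongrightarrow> L) at_top"
    unfolding tendsto_bot_mirror by (simp add: sm_def)
  then show "\<exists>L. ((\<lambda>n. z powi (-n) * snd (\<phi> n)) \<longlongrightarrow> L) at_top" by blast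
qed

end

lemma det_mapp: "fst (mapp A u) * snd (mapp A v) - snd (mapp A u) * fst (mapp A v) =
    (m11 A * m22 A - m12 A * m21 A) * (fst u * snd v - snd u * fst v)"
  by (simp add: mapp_def algebra_simps)

lemma det_sysQ: "z \<noteq> 0 \<Longrightarrow> m11 (sysQ q r z n) * m22 (sysQ q r z n) - m12 (sysQ q r z n) * m21 (sysQ q r z n) = 1"
  by (simp add: sysQ_def field_simps)

lemma int_const:
  fixes f :: "int \<Rightarrow> 'a"
  assumes "\<And>n. f n = f (n+1)"
  shows "f n = f 0"
proof (induction n rule: int_induct[where k=0])
  case base then show ?case by simp
next
  case (step1 i) then show ?case using assms[of i] by simp
next
  case (step2 i) then show ?case using assms[of "i-1"] by simp
qed

lemma wron_const:
  assumes "z \<noteq> 0" "is_sol (sysQ q r) z X" "is_sol (sysQ q r) z Y"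
  shows "fst (X n) * snd (Y n) - snd (X n) * fst (Y n) = fst (X 0) * snd (Y 0) - snd (X 0) * fst (Y 0)"
proof (rule int_const[where f="\<lambda>n. fst (X n) * snd (Y n) - snd (X n) * fst (Y n)"])
  fix n
  have "X n = mapp (sysQ q r z n) (X (n+1))" "Y n = mapp (sysQ q r z n) (Y (n+1))"
    using assms(2,3) unfolding is_sol_bsol bsol_def by blast+
  then show "fst (X n) * snd (Y n) - snd (X n) * fst (Y n) = fst (X (n+1)) * snd (Y (n+1)) - snd (X (n+1)) * fst (Y (n+1))"
    using det_mapp[of "sysQ q r z n" "X (n+1)" "Y (n+1)"] det_sysQ[OF assms(1), of q r n] by simp
qed

lemma powi_cancel: "(z::complex) \<noteq> 0 \<Longrightarrow> z powi n * z powi (-n) = 1"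
  by (simp add: power_int_minus)

context QR
begin

lemma wronskian:
  assumes z: "z \<noteq> 0" "cmod z \<le> 1"
  shows "trans_l (sysQ q r) z = trans_r (sysQ q r) z"
proof -
  define \<psi> where "\<psi> = jost_psi (sysQ q r) z"
  define \<phi> where "\<phi> = jost_phi (sysQ q r) z"
  note P = qpsi[OF z, folded \<psi>_def] and F = qphi[OF z, folded \<phi>_def]
  obtain Lp where Lp: "((\<lambda>n. z powi (-n) * snd (\<psi> n)) \<longlongrightarrow> Lp) at_bot" using P(4) by blast
  obtain Lf where Lf: "((\<lambda>n. z powi n * fst (\<phi> n)) \<longlongrightarrow> Lf) at_top" using F(4) by blast
  obtain C1 where C1: "eventually (\<lambda>n. cmod (z powi (-n) * fst (\<psi> n)) \<le> C1) at_bot" using P(3) by blast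
  obtain C2 where C2: "eventually (\<lambda>n. cmod (z powi n * snd (\<phi> n)) \<le> C2) at_top" using F(3) by blast
  define W0 where "W0 = fst (\<phi> 0) * snd (\<psi> 0) - snd (\<phi> 0) * fst (\<psi> 0)"
  have Wn: "W0 = (z powi n * fst (\<phi> n)) * (z powi (-n) * snd (\<psi> n)) - (z powi (-n) * fst (\<psi> n)) * (z powi n * snd (\<phi> n))" for n
  proof -
    have "W0 = fst (\<phi> n) * snd (\<psi> n) - snd (\<phi> n) * fst (\<psi> n)"
      unfolding W0_def using wron_const[OF z(1), where X=\<phi> and Y=\<psi> and n=n and q=q and r=r] P(2) F(2) by (simp add: JP_def)
    also have "\<dots> = (z powi n * z powi (-n)) * (fst (\<phi> n) * snd (\<psi> n) - snd (\<phi> n) * fst (\<psi> n))"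
      by (simp add: powi_cancel[OF z(1)])
    finally show ?thesis by (simp add: algebra_simps)
  qed
  have "((\<lambda>n. (z powi n * fst (\<phi> n)) * (z powi (-n) * snd (\<psi> n)) - (z powi (-n) * fst (\<psi> n)) * (z powi n * snd (\<phi> n))) \<longlongrightarrow> Lf * 1 - 0) at_top"
    using P(2) by (intro tendsto_intros Lf bdd_mult_zero[OF _ C2]) (auto simp: JP_def)
  then have "((\<lambda>n::int. W0) \<longlongrightarrow> Lf) at_top" unfolding Wn[symmetric] by simp
  then have 1: "W0 = Lf" by (simp add: tendsto_const_iff)
  have "((\<lambda>n. (z powi n * fst (\<phi> n)) * (z powi (-n) * snd (\<psi> n)) - (z powi n * snd (\<phi> n)) * (z powi (-n) * fst (\<psi> n))) \<longlongrightarrow> 1 * Lp - 0) at_bot"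
    using F(2) by (intro tendsto_intros Lp bdd_mult_zero[OF _ C1]) (auto simp: JP_def)
  moreover have Wn2: "W0 = (z powi n * fst (\<phi> n)) * (z powi (-n) * snd (\<psi> n)) - (z powi n * snd (\<phi> n)) * (z powi (-n) * fst (\<psi> n))" for n
    by (simp only: Wn[of n] mult.commute[of "z powi (-n) * fst (\<psi> n)"])
  ultimately have "((\<lambda>n::int. W0) \<longlongrightarrow> Lp) at_bot" unfolding Wn2[symmetric] by simp
  then have 2: "W0 = Lp" by (simp add: tendsto_const_iff)
  have "Lim at_bot (\<lambda>n. z powi (-n) * snd (\<psi> n)) = Lp" by (intro tendsto_Lim Lp) simp
  moreover have "Lim at_top (\<lambda>n. z powi n * fst (\<phi> n)) = Lf" by (intro tendsto_Lim Lf) simp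
  ultimately show ?thesis unfolding trans_l_def trans_r_def \<psi>_def[symmetric] \<phi>_def[symmetric] using 1 2 by simp
qed

lemma wronskian_bar:
  assumes z: "z \<noteq> 0" "cmod z \<ge> 1"
  shows "transbar_l (sysQ q r) z = transbar_r (sysQ q r) z"
proof -
  define \<psi> where "\<psi> = jost_psibar (sysQ q r) z"
  define \<phi> where "\<phi> = jost_phibar (sysQ q r) z"
  note P = qpsib[OF z, folded \<psi>_def] and F = qphib[OF z, folded \<phi>_def]
  obtain Lp where Lp: "((\<lambda>n. z powi n * fst (\<psi> n)) \<longlongrightarrow> Lp) at_bot" using P(4) by blast
  obtain Lf where Lf: "((\<lambda>n. z powi (-n) * snd (\<phi> n)) \<longlongrightarrow> Lf) at_top" using F(4) by blast
  obtain C1 where C1: "eventually (\<lambda>n. cmod (z powi n * snd (\<psi> n)) \<le> C1) at_bot" using P(3) by blast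
  obtain C2 where C2: "eventually (\<lambda>n. cmod (z powi (-n) * fst (\<phi> n)) \<le> C2) at_top" using F(3) by blast
  define W0 where "W0 = fst (\<psi> 0) * snd (\<phi> 0) - snd (\<psi> 0) * fst (\<phi> 0)"
  have Wn: "W0 = (z powi n * fst (\<psi> n)) * (z powi (-n) * snd (\<phi> n)) - (z powi n * snd (\<psi> n)) * (z powi (-n) * fst (\<phi> n))" for n
  proof -
    have "W0 = fst (\<psi> n) * snd (\<phi> n) - snd (\<psi> n) * fst (\<phi> n)"
      unfolding W0_def using wron_const[OF z(1), where X=\<psi> and Y=\<phi> and n=n and q=q and r=r] P(2) F(2) by (simp add: JP_def)
    also have "\<dots> = (z powi n * z powi (-n)) * (fst (\<psi> n) * snd (\<phi> n) - snd (\<psi> n) * fst (\<phi> n))"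
      by (simp add: powi_cancel[OF z(1)])
    finally show ?thesis by (simp add: algebra_simps)
  qed
  have "((\<lambda>n. (z powi n * fst (\<psi> n)) * (z powi (-n) * snd (\<phi> n)) - (z powi n * snd (\<psi> n)) * (z powi (-n) * fst (\<phi> n))) \<longlongrightarrow> 1 * Lf - 0) at_top"
    using P(2) by (intro tendsto_intros Lf bdd_mult_zero[OF _ C2]) (auto simp: JP_def)
  then have "((\<lambda>n::int. W0) \<longlongrightarrow> Lf) at_top" unfolding Wn[symmetric] by simp
  then have 1: "W0 = Lf" by (simp add: tendsto_const_iff)
  have "((\<lambda>n. (z powi n * fst (\<psi> n)) * (z powi (-n) * snd (\<phi> n)) - (z powi (-n) * fst (\<phi> n)) * (z powi n * snd (\<psi> n))) \<longlongrightarrow> Lp * 1 - 0) at_bot"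
    using F(2) by (intro tendsto_intros Lp bdd_mult_zero[OF _ C1]) (auto simp: JP_def)
  moreover have Wn2: "W0 = (z powi n * fst (\<psi> n)) * (z powi (-n) * snd (\<phi> n)) - (z powi (-n) * fst (\<phi> n)) * (z powi n * snd (\<psi> n))" for n
    by (simp only: Wn[of n] mult.commute[of "z powi n * snd (\<psi> n)"])
  ultimately have "((\<lambda>n::int. W0) \<longlongrightarrow> Lp) at_bot" unfolding Wn2[symmetric] by simp
  then have 2: "W0 = Lp" by (simp add: tendsto_const_iff)
  have "Lim at_bot (\<lambda>n. z powi n * fst (\<psi> n)) = Lp" by (intro tendsto_Lim Lp) simp
  moreover have "Lim at_top (\<lambda>n. z powi (-n) * snd (\<phi> n)) = Lf" by (intro tendsto_Lim Lf) simp
  ultimately show ?thesis unfolding transbar_l_def transbar_r_def \<psi>_def[symmetric] \<phi>_def[symmetric] using 1 2 by simp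
qed

end

lemma XF_snd:
  assumes ex: "\<exists>!X. JP Ma z F \<sigma> e1 e2 X" and X0: "JP Ma z F \<sigma> e1 e2 X0"
    and g1: "\<And>n. mmul (G n) (Ma z n) = mmul (Mb z n) (G (n+1))"
    and hg: "\<And>n. mmul (H n) (G n) = idm" and gh: "\<And>n. mmul (G n) (H n) = idm"
    and Glim: "(G \<longlongrightarrow> Gi) F" and Hlim: "(H \<longlongrightarrow> Hi) F"
    and Ge: "mapp Gi (e1, e2) = sm c (e1, e2)" and He: "mapp Hi (e1, e2) = sm (1/c) (e1, e2)" and c: "c \<noteq> 0"
    and G'lim: "(G \<longlongrightarrow> Gi') F'" and G'0: "m21 Gi' = 0"
    and bd: "eventually (\<lambda>n. cmod (\<sigma>' n * fst (X0 n)) \<le> C) F'" and cv: "((\<lambda>n. \<sigma>' n * snd (X0 n)) \<longlongrightarrow> L) F'"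
    and F': "F' \<noteq> bot"
  shows "1 / Lim F' (\<lambda>n. \<sigma>' n * snd ((THE Y. JP Mb z F \<sigma> e1 e2 Y) n)) = (c / m22 Gi') * (1 / Lim F' (\<lambda>n. \<sigma>' n * snd (X0 n)))"
proof -
  note tr = TR[where Ma=Ma and Mb=Mb and G=G and H=H and \<sigma>=\<sigma> and z=z and F=F, OF ex X0 g1 hg gh Glim Hlim Ge He c]
  have "(THE Y. JP Mb z F \<sigma> e1 e2 Y) = (\<lambda>n. sm (1/c) (mapp (G n) (X0 n)))"
    using tr by (intro the1_equality) auto
  moreover have "Lim F' (\<lambda>n. \<sigma>' n * snd (sm (1/c) (mapp (G n) (X0 n)))) = m22 Gi' * L / c"
    using OE_snd[OF G'lim G'0 bd cv] F' by (intro tendsto_Lim) auto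
  moreover have "Lim F' (\<lambda>n. \<sigma>' n * snd (X0 n)) = L" using cv F' by (intro tendsto_Lim) auto
  ultimately show ?thesis by (simp add: divide_divide_eq_left)
qed

lemma XF_fst:
  assumes ex: "\<exists>!X. JP Ma z F \<sigma> e1 e2 X" and X0: "JP Ma z F \<sigma> e1 e2 X0"
    and g1: "\<And>n. mmul (G n) (Ma z n) = mmul (Mb z n) (G (n+1))"
    and hg: "\<And>n. mmul (H n) (G n) = idm" and gh: "\<And>n. mmul (G n) (H n) = idm"
    and Glim: "(G \<longlongrightarrow> Gi) F" and Hlim: "(H \<longlongrightarrow> Hi) F"
    and Ge: "mapp Gi (e1, e2) = sm c (e1, e2)" and He: "mapp Hi (e1, e2) = sm (1/c) (e1, e2)" and c: "c \<noteq> 0"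
    and G'lim: "(G \<longlongrightarrow> Gi') F'" and G'0: "m12 Gi' = 0"
    and bd: "eventually (\<lambda>n. cmod (\<sigma>' n * snd (X0 n)) \<le> C) F'" and cv: "((\<lambda>n. \<sigma>' n * fst (X0 n)) \<longlongrightarrow> L) F'"
    and F': "F' \<noteq> bot"
  shows "1 / Lim F' (\<lambda>n. \<sigma>' n * fst ((THE Y. JP Mb z F \<sigma> e1 e2 Y) n)) = (c / m11 Gi') * (1 / Lim F' (\<lambda>n. \<sigma>' n * fst (X0 n)))"
proof -
  note tr = TR[where Ma=Ma and Mb=Mb and G=G and H=H and \<sigma>=\<sigma> and z=z and F=F, OF ex X0 g1 hg gh Glim Hlim Ge He c]
  have "(THE Y. JP Mb z F \<sigma> e1 e2 Y) = (\<lambda>n. sm (1/c) (mapp (G n) (X0 n)))"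
    using tr by (intro the1_equality) auto
  moreover have "Lim F' (\<lambda>n. \<sigma>' n * fst (sm (1/c) (mapp (G n) (X0 n)))) = m11 Gi' * L / c"
    using OE_fst[OF G'lim G'0 bd cv] F' by (intro tendsto_Lim) auto
  moreover have "Lim F' (\<lambda>n. \<sigma>' n * fst (X0 n)) = L" using cv F' by (intro tendsto_Lim) auto
  ultimately show ?thesis by (simp add: divide_divide_eq_left)
qed

context QR
begin

abbreviation "D \<equiv> Dprod q r"
abbreviation "E \<equiv> Eprod q r"

lemma D_facts: "\<And>n. D n \<noteq> 0" "\<And>n. D n = D (n-1) * (1 - q n * r n)"
    "\<exists>L. L \<noteq> 0 \<and> (D \<longlongrightarrow> L) at_top" "\<exists>L. L \<noteq> 0 \<and> (D \<longlongrightarrow> L) at_bot"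
proof -
  have st: "summable (\<lambda>i. cmod ((1 - q (n + int i) * r (n + int i)) - 1))" for n
    using rd2_sum(1)[OF rd_qr, of n] by simp
  have sb: "summable (\<lambda>i. cmod ((1 - q (n - int i) * r (n - int i)) - 1))" for n
    using rd2_sum(2)[OF rd_qr, of n] by simp
  have P: "D n = Lim at_bot (\<lambda>m. \<Prod>j\<in>{m..n}. 1 - q j * r j)" for n by (simp add: Dprod_def)
  note pr = PR[where f="\<lambda>j. 1 - q j * r j", OF nz1 st sb P]
  show "\<And>n. D n \<noteq> 0" by (rule pr(1))
  show "\<And>n. D n = D (n-1) * (1 - q n * r n)" by (rule pr(2))
  show "\<exists>L. L \<noteq> 0 \<and> (D \<longlongrightarrow> L) at_top" by (rule pr(3))
  show "\<exists>L. L \<noteq> 0 \<and> (D \<longlongrightarrow> L) at_bot" by (rule pr(4))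
qed

lemma E_facts: "\<And>n. E n \<noteq> 0" "\<And>n. E n = E (n-1) * (1 + q n * r (n+1))"
    "\<exists>L. L \<noteq> 0 \<and> (E \<longlongrightarrow> L) at_top" "\<exists>L. L \<noteq> 0 \<and> (E \<longlongrightarrow> L) at_bot"
proof -
  have st: "summable (\<lambda>i. cmod ((1 + q (n + int i) * r (n + int i + 1)) - 1))" for n
    using rd2_sum(1)[OF rd_qr1, of n] by simp
  have sb: "summable (\<lambda>i. cmod ((1 + q (n - int i) * r (n - int i + 1)) - 1))" for n
    using rd2_sum(2)[OF rd_qr1, of n] by simp
  have P: "E n = Lim at_bot (\<lambda>m. \<Prod>j\<in>{m..n}. 1 + q j * r (j+1))" for n by (simp add: Eprod_def)
  note pr = PR[where f="\<lambda>j. 1 + q j * r (j+1)", OF nz2 st sb P]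
  show "\<And>n. E n \<noteq> 0" by (rule pr(1))
  show "\<And>n. E n = E (n-1) * (1 + q n * r (n+1))" by (rule pr(2))
  show "\<exists>L. L \<noteq> 0 \<and> (E \<longlongrightarrow> L) at_top" by (rule pr(3))
  show "\<exists>L. L \<noteq> 0 \<and> (E \<longlongrightarrow> L) at_bot" by (rule pr(4))
qed

definition "Dp = Lim at_top D"
definition "Dm = Lim at_bot D"
definition "Ep = Lim at_top E"
definition "Em = Lim at_bot E"

lemma lims: "(D \<longlongrightarrow> Dp) at_top" "(D \<longlongrightarrow> Dm) at_bot" "(E \<longlongrightarrow> Ep) at_top" "(E \<longlongrightarrow> Em) at_bot"
    "Dp \<noteq> 0" "Dm \<noteq> 0" "Ep \<noteq> 0" "Em \<noteq> 0"
proof -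
  obtain a where a: "a \<noteq> 0" "(D \<longlongrightarrow> a) at_top" using D_facts(3) by blast
  obtain b where b: "b \<noteq> 0" "(D \<longlongrightarrow> b) at_bot" using D_facts(4) by blast
  obtain c where c: "c \<noteq> 0" "(E \<longlongrightarrow> c) at_top" using E_facts(3) by blast
  obtain d where d: "d \<noteq> 0" "(E \<longlongrightarrow> d) at_bot" using E_facts(4) by blast
  have "Dp = a" "Dm = b" "Ep = c" "Em = d" unfolding Dp_def Dm_def Ep_def Em_def
    using a b c d by (auto intro!: tendsto_Lim)
  then show "(D \<longlongrightarrow> Dp) at_top" "(D \<longlongrightarrow> Dm) at_bot" "(E \<longlongrightarrow> Ep) at_top" "(E \<longlongrightarrow> Em) at_bot"
    "Dp \<noteq> 0" "Dm \<noteq> 0" "Ep \<noteq> 0" "Em \<noteq> 0" using a b c d by auto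
qed

lemma shift_lim: "((\<lambda>n. D (n-1)) \<longlongrightarrow> Dp) at_top" "((\<lambda>n. D (n-1)) \<longlongrightarrow> Dm) at_bot"
    "((\<lambda>n. E (n-1)) \<longlongrightarrow> Ep) at_top" "((\<lambda>n. E (n-1)) \<longlongrightarrow> Em) at_bot"
  using filterlim_compose[OF lims(1) fl_shift_top[of "-1"]] filterlim_compose[OF lims(2) fl_shift_bot[of "-1"]]
        filterlim_compose[OF lims(3) fl_shift_top[of "-1"]] filterlim_compose[OF lims(4) fl_shift_bot[of "-1"]]
  by simp_all

definition GU :: "complex \<Rightarrow> int \<Rightarrow> complex \<times> complex \<times> complex \<times> complex" where
  "GU z n = (z * E (n-1), 0, -z * r n * D (n-1), (z - inverse z) * D (n-1))"
definition HU :: "complex \<Rightarrow> int \<Rightarrow> complex \<times> complex \<times> complex \<times> complex" where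
  "HU z n = (inverse (z * E (n-1)), 0, r n / ((z - inverse z) * E (n-1)), inverse ((z - inverse z) * D (n-1)))"
definition GP :: "int \<Rightarrow> complex \<times> complex \<times> complex \<times> complex" where
  "GP n = (E (n-1) * (1 - q n * r n), E (n-1) * q n, -D n * r n, D n)"
definition HP :: "int \<Rightarrow> complex \<times> complex \<times> complex \<times> complex" where
  "HP n = (inverse (E (n-1)), -q n / D n, r n / E (n-1), (1 - q n * r n) / D n)"

lemma zz: assumes "z \<noteq> 0" "cmod z \<noteq> 1" shows "z - inverse z \<noteq> 0"
proof
  assume "z - inverse z = 0"
  then have "z * z = 1" using assms(1) by (simp add: field_simps)
  then have h: "cmod z * cmod z = 1" by (metis norm_mult norm_one)
  have "(cmod z - 1) * (cmod z + 1) = 0" using h by (simp add: algebra_simps)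
  moreover have "cmod z + 1 \<noteq> 0" using norm_ge_zero[of z] by linarith
  ultimately have "cmod z = 1" by simp
  then show False using assms(2) by simp
qed

lemma GU_gauge: assumes "z \<noteq> 0"
  shows "mmul (GU z n) (sysQ q r z n) = mmul (sysU (pot_u q r) (pot_v q r) z n) (GU z (n+1))"
proof -
  have "mmul (GU z n) (sysQ q r z n) = mmul (z*E (n-1), 0, -z*r n*D (n-1), (z - inverse z)*D (n-1)) (z, (z - inverse z)*q n, z*r n, inverse z + (z - inverse z)*q n*r n)"
    by (simp add: GU_def sysQ_def)
  also have "\<dots> = mmul (z, z*(q n*E (n-1)/(D (n-1) * (1 - q n*r n))), inverse z * ((-r n + r (n+1) - q n*r n*r (n+1))*D (n-1)/(E (n-1) * (1 + q n*r (n+1)))), inverse z)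
              (z*(E (n-1) * (1 + q n*r (n+1))), 0, -z*r (n+1)*(D (n-1) * (1 - q n*r n)), (z - inverse z)*(D (n-1) * (1 - q n*r n)))"
    by (rule gaugeU_alg[OF nz1 nz2 D_facts(1) E_facts(1) assms])
  also have "\<dots> = mmul (sysU (pot_u q r) (pot_v q r) z n) (GU z (n+1))"
    by (simp add: GU_def sysU_def pot_u_def pot_v_def D_facts(2)[of n, symmetric] E_facts(2)[of n, symmetric])
  finally show ?thesis .
qed

lemma GP_gauge: assumes "z \<noteq> 0"
  shows "mmul (GP n) (sysQ q r z n) = mmul (sysU (pot_p q r) (pot_s q r) z n) (GP (n+1))"
proof -
  have "mmul (GP n) (sysQ q r z n) = mmul (E (n-1)*(1 - q n*r n), E (n-1)*q n, -D n*r n, D n) (z, (z - inverse z)*q n, z*r n, inverse z + (z - inverse z)*q n*r n)"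
    by (simp add: GP_def sysQ_def)
  also have "\<dots> = mmul (z, z*((q n - q (n+1) - q n*q (n+1)*r (n+1))*E (n-1)/(D n * (1 - q (n+1)*r (n+1)))), inverse z * (r (n+1)*D n/(E (n-1) * (1 + q n*r (n+1)))), inverse z)
              ((E (n-1) * (1 + q n*r (n+1)))*(1 - q (n+1)*r (n+1)), (E (n-1) * (1 + q n*r (n+1)))*q (n+1), -(D n * (1 - q (n+1)*r (n+1)))*r (n+1), D n * (1 - q (n+1)*r (n+1)))"
    by (rule gaugeP_alg[OF nz1 nz2 E_facts(1) D_facts(1) assms])
  also have "\<dots> = mmul (sysU (pot_p q r) (pot_s q r) z n) (GP (n+1))"
    using D_facts(2)[of "n+1"] E_facts(2)[of n]
    by (simp add: GP_def sysU_def pot_p_def pot_s_def)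
  finally show ?thesis .
qed

lemma GU_inv: assumes "z \<noteq> 0" "z - inverse z \<noteq> 0"
  shows "mmul (HU z n) (GU z n) = idm" "mmul (GU z n) (HU z n) = idm"
  using assms D_facts(1)[of "n-1"] E_facts(1)[of "n-1"]
  by (simp_all add: HU_def GU_def mmul_def idm_def field_simps)

lemma GP_inv: "mmul (HP n) (GP n) = idm" "mmul (GP n) (HP n) = idm"
  using D_facts(1)[of n] E_facts(1)[of "n-1"] nz1[of n]
  by (simp_all add: HP_def GP_def mmul_def idm_def field_simps)

end

context QR
begin

lemma GU_lim: assumes "z \<noteq> 0" "z - inverse z \<noteq> 0"
  shows "(GU z \<longlongrightarrow> (z*Ep, 0, 0, (z - inverse z)*Dp)) at_top"
    and "(GU z \<longlongrightarrow> (z*Em, 0, 0, (z - inverse z)*Dm)) at_bot"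
    and "(HU z \<longlongrightarrow> (inverse (z*Ep), 0, 0, inverse ((z - inverse z)*Dp))) at_top"
    and "(HU z \<longlongrightarrow> (inverse (z*Em), 0, 0, inverse ((z - inverse z)*Dm))) at_bot"
proof -
  have g: "GU z = (\<lambda>n. (z * E (n-1), 0, -z * r n * D (n-1), (z - inverse z) * D (n-1)))"
    by (simp add: GU_def fun_eq_iff)
  have h: "HU z = (\<lambda>n. (inverse (z * E (n-1)), 0, r n / ((z - inverse z) * E (n-1)), inverse ((z - inverse z) * D (n-1))))"
    by (simp add: HU_def fun_eq_iff)
  note nz = lims(5-8) assms
  have "(GU z \<longlongrightarrow> (z*Ep, 0, -z*0*Dp, (z - inverse z)*Dp)) at_top"
    unfolding g by (intro tendsto_intros shift_lim r_lim)
  then show "(GU z \<longlongrightarrow> (z*Ep, 0, 0, (z - inverse z)*Dp)) at_top" by simp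
  have "(GU z \<longlongrightarrow> (z*Em, 0, -z*0*Dm, (z - inverse z)*Dm)) at_bot"
    unfolding g by (intro tendsto_intros shift_lim r_lim)
  then show "(GU z \<longlongrightarrow> (z*Em, 0, 0, (z - inverse z)*Dm)) at_bot" by simp
  have "(HU z \<longlongrightarrow> (inverse (z*Ep), 0, 0 / ((z - inverse z)*Ep), inverse ((z - inverse z)*Dp))) at_top"
    unfolding h using nz by (intro tendsto_intros shift_lim r_lim) auto
  then show "(HU z \<longlongrightarrow> (inverse (z*Ep), 0, 0, inverse ((z - inverse z)*Dp))) at_top" by simp
  have "(HU z \<longlongrightarrow> (inverse (z*Em), 0, 0 / ((z - inverse z)*Em), inverse ((z - inverse z)*Dm))) at_bot"
    unfolding h using nz by (intro tendsto_intros shift_lim r_lim) auto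
  then show "(HU z \<longlongrightarrow> (inverse (z*Em), 0, 0, inverse ((z - inverse z)*Dm))) at_bot" by simp
qed

lemma GP_lim:
  shows "(GP \<longlongrightarrow> (Ep, 0, 0, Dp)) at_top"
    and "(GP \<longlongrightarrow> (Em, 0, 0, Dm)) at_bot"
    and "(HP \<longlongrightarrow> (inverse Ep, 0, 0, inverse Dp)) at_top"
    and "(HP \<longlongrightarrow> (inverse Em, 0, 0, inverse Dm)) at_bot"
proof -
  have g: "GP = (\<lambda>n. (E (n-1) * (1 - q n * r n), E (n-1) * q n, -D n * r n, D n))"
    by (simp add: GP_def fun_eq_iff)
  have h: "HP = (\<lambda>n. (inverse (E (n-1)), -q n / D n, r n / E (n-1), (1 - q n * r n) / D n))"
    by (simp add: HP_def fun_eq_iff)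
  note nz = lims(5-8)
  have "(GP \<longlongrightarrow> (Ep * (1 - 0 * 0), Ep * 0, -Dp * 0, Dp)) at_top"
    unfolding g by (intro tendsto_intros shift_lim r_lim q_lim lims)
  then show "(GP \<longlongrightarrow> (Ep, 0, 0, Dp)) at_top" by simp
  have "(GP \<longlongrightarrow> (Em * (1 - 0 * 0), Em * 0, -Dm * 0, Dm)) at_bot"
    unfolding g by (intro tendsto_intros shift_lim r_lim q_lim lims)
  then show "(GP \<longlongrightarrow> (Em, 0, 0, Dm)) at_bot" by simp
  have "(HP \<longlongrightarrow> (inverse Ep, -0 / Dp, 0 / Ep, (1 - 0 * 0) / Dp)) at_top"
    unfolding h using nz by (intro tendsto_intros shift_lim r_lim q_lim lims; simp)
  then show "(HP \<longlongrightarrow> (inverse Ep, 0, 0, inverse Dp)) at_top" by (simp add: divide_inverse)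
  have "(HP \<longlongrightarrow> (inverse Em, -0 / Dm, 0 / Em, (1 - 0 * 0) / Dm)) at_bot"
    unfolding h using nz by (intro tendsto_intros shift_lim r_lim q_lim lims; simp)
  then show "(HP \<longlongrightarrow> (inverse Em, 0, 0, inverse Dm)) at_bot" by (simp add: divide_inverse)
qed

lemma rel_U_l:
  assumes z: "z \<noteq> 0" "cmod z < 1"
  shows "trans_l (sysU (pot_u q r) (pot_v q r)) z = (Dp / Dm) * trans_l (sysQ q r) z"
proof -
  have z': "cmod z \<le> 1" using z by simp
  have zi: "z - inverse z \<noteq> 0" using zz[OF z(1)] z by auto
  note P = qpsi[OF z(1) z']
  obtain L where L: "((\<lambda>n. z powi (-n) * snd (jost_psi (sysQ q r) z n)) \<longlongrightarrow> L) at_bot" using P(4) by blast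
  obtain C where C: "eventually (\<lambda>n. cmod (z powi (-n) * fst (jost_psi (sysQ q r) z n)) \<le> C) at_bot" using P(3) by blast
  have X: "1 / Lim at_bot (\<lambda>n. z powi (-n) * snd ((THE Y. JP (sysU (pot_u q r) (pot_v q r)) z at_top (\<lambda>n. z powi (-n)) 0 1 Y) n))
      = (((z - inverse z) * Dp) / m22 (z*Em, 0, 0, (z - inverse z)*Dm)) * (1 / Lim at_bot (\<lambda>n. z powi (-n) * snd (jost_psi (sysQ q r) z n)))"
    by (rule XF_snd[where Ma="sysQ q r" and Mb="sysU (pot_u q r) (pot_v q r)" and G="GU z" and H="HU z" and \<sigma>="\<lambda>n. z powi (-n)" and \<sigma>'="\<lambda>n. z powi (-n)" and z=z and F=at_top and F'=at_bot, OF P(1) P(2) GU_gauge[OF z(1)] GU_inv[OF z(1) zi] GU_lim(1,3)[OF z(1) zi] _ _ _ GU_lim(2)[OF z(1) zi] _ C L])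
       (use lims(5-8) z(1) zi in \<open>simp_all add: mapp_def sm_def divide_inverse\<close>)
  have k: "((z - inverse z) * Dp) / m22 (z*Em, 0, 0, (z - inverse z)*Dm) = Dp / Dm" using zi by simp
  show ?thesis unfolding trans_l_def jost_psi_JP k[symmetric] by (rule X[unfolded jost_psi_JP])
qed


lemma rel_U_r:
  assumes z: "z \<noteq> 0" "cmod z < 1"
  shows "trans_r (sysU (pot_u q r) (pot_v q r)) z = (Em / Ep) * trans_r (sysQ q r) z"
proof -
  have z': "cmod z \<le> 1" using z by simp
  have zi: "z - inverse z \<noteq> 0" using zz[OF z(1)] z by auto
  note P = qphi[OF z(1) z']
  obtain L where L: "((\<lambda>n. z powi n * fst (jost_phi (sysQ q r) z n)) \<longlongrightarrow> L) at_top" using P(4) by blast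
  obtain C where C: "eventually (\<lambda>n. cmod (z powi n * snd (jost_phi (sysQ q r) z n)) \<le> C) at_top" using P(3) by blast
  have X: "1 / Lim at_top (\<lambda>n. z powi n * fst ((THE Y. JP (sysU (pot_u q r) (pot_v q r)) z at_bot (\<lambda>n. z powi n) 1 0 Y) n))
      = ((z*Em) / m11 (z*Ep, 0, 0, (z - inverse z)*Dp)) * (1 / Lim at_top (\<lambda>n. z powi n * fst (jost_phi (sysQ q r) z n)))"
    by (rule XF_fst[where Ma="sysQ q r" and Mb="sysU (pot_u q r) (pot_v q r)" and G="GU z" and H="HU z" and \<sigma>="\<lambda>n. z powi n" and \<sigma>'="\<lambda>n. z powi n" and z=z and F=at_bot and F'=at_top,
        OF P(1) P(2) GU_gauge[OF z(1)] GU_inv[OF z(1) zi] GU_lim(2,4)[OF z(1) zi] _ _ _ GU_lim(1)[OF z(1) zi] _ C L])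
       (use lims(5-8) z(1) zi in \<open>simp_all add: mapp_def sm_def divide_inverse\<close>)
  have k: "(z*Em) / m11 (z*Ep, 0, 0, (z - inverse z)*Dp) = Em / Ep" using zi z(1) by simp
  show ?thesis unfolding trans_r_def jost_phi_JP k[symmetric] by (rule X[unfolded jost_phi_JP])
qed

lemma rel_P_l:
  assumes z: "z \<noteq> 0" "cmod z < 1"
  shows "trans_l (sysU (pot_p q r) (pot_s q r)) z = (Dp / Dm) * trans_l (sysQ q r) z"
proof -
  have z': "cmod z \<le> 1" using z by simp
  have zi: "z - inverse z \<noteq> 0" using zz[OF z(1)] z by auto
  note P = qpsi[OF z(1) z']
  obtain L where L: "((\<lambda>n. z powi (-n) * snd (jost_psi (sysQ q r) z n)) \<longlongrightarrow> L) at_bot" using P(4) by blast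
  obtain C where C: "eventually (\<lambda>n. cmod (z powi (-n) * fst (jost_psi (sysQ q r) z n)) \<le> C) at_bot" using P(3) by blast
  have X: "1 / Lim at_bot (\<lambda>n. z powi (-n) * snd ((THE Y. JP (sysU (pot_p q r) (pot_s q r)) z at_top (\<lambda>n. z powi (-n)) 0 1 Y) n))
      = (Dp / m22 (Em, 0, 0, Dm)) * (1 / Lim at_bot (\<lambda>n. z powi (-n) * snd (jost_psi (sysQ q r) z n)))"
    by (rule XF_snd[where Ma="sysQ q r" and Mb="sysU (pot_p q r) (pot_s q r)" and G="GP" and H="HP" and \<sigma>="\<lambda>n. z powi (-n)" and \<sigma>'="\<lambda>n. z powi (-n)" and z=z and F=at_top and F'=at_bot,
        OF P(1) P(2) GP_gauge[OF z(1)] GP_inv GP_lim(1,3) _ _ _ GP_lim(2) _ C L])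
       (use lims(5-8) z(1) zi in \<open>simp_all add: mapp_def sm_def divide_inverse\<close>)
  have k: "Dp / m22 (Em, 0, 0, Dm) = Dp / Dm" using zi z(1) by simp
  show ?thesis unfolding trans_l_def jost_psi_JP k[symmetric] by (rule X[unfolded jost_psi_JP])
qed

lemma rel_P_r:
  assumes z: "z \<noteq> 0" "cmod z < 1"
  shows "trans_r (sysU (pot_p q r) (pot_s q r)) z = (Em / Ep) * trans_r (sysQ q r) z"
proof -
  have z': "cmod z \<le> 1" using z by simp
  have zi: "z - inverse z \<noteq> 0" using zz[OF z(1)] z by auto
  note P = qphi[OF z(1) z']
  obtain L where L: "((\<lambda>n. z powi n * fst (jost_phi (sysQ q r) z n)) \<longlongrightarrow> L) at_top" using P(4) by blast
  obtain C where C: "eventually (\<lambda>n. cmod (z powi n * snd (jost_phi (sysQ q r) z n)) \<le> C) at_top" using P(3) by blast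
  have X: "1 / Lim at_top (\<lambda>n. z powi n * fst ((THE Y. JP (sysU (pot_p q r) (pot_s q r)) z at_bot (\<lambda>n. z powi n) 1 0 Y) n))
      = (Em / m11 (Ep, 0, 0, Dp)) * (1 / Lim at_top (\<lambda>n. z powi n * fst (jost_phi (sysQ q r) z n)))"
    by (rule XF_fst[where Ma="sysQ q r" and Mb="sysU (pot_p q r) (pot_s q r)" and G="GP" and H="HP" and \<sigma>="\<lambda>n. z powi n" and \<sigma>'="\<lambda>n. z powi n" and z=z and F=at_bot and F'=at_top,
        OF P(1) P(2) GP_gauge[OF z(1)] GP_inv GP_lim(2,4) _ _ _ GP_lim(1) _ C L])
       (use lims(5-8) z(1) zi in \<open>simp_all add: mapp_def sm_def divide_inverse\<close>)
  have k: "Em / m11 (Ep, 0, 0, Dp) = Em / Ep" using zi z(1) by simp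
  show ?thesis unfolding trans_r_def jost_phi_JP k[symmetric] by (rule X[unfolded jost_phi_JP])
qed

lemma rel_U_bl:
  assumes z: "z \<noteq> 0" "cmod z > 1"
  shows "transbar_l (sysU (pot_u q r) (pot_v q r)) z = (Ep / Em) * transbar_l (sysQ q r) z"
proof -
  have z': "cmod z \<ge> 1" using z by simp
  have zi: "z - inverse z \<noteq> 0" using zz[OF z(1)] z by auto
  note P = qpsib[OF z(1) z']
  obtain L where L: "((\<lambda>n. z powi n * fst (jost_psibar (sysQ q r) z n)) \<longlongrightarrow> L) at_bot" using P(4) by blast
  obtain C where C: "eventually (\<lambda>n. cmod (z powi n * snd (jost_psibar (sysQ q r) z n)) \<le> C) at_bot" using P(3) by blast
  have X: "1 / Lim at_bot (\<lambda>n. z powi n * fst ((THE Y. JP (sysU (pot_u q r) (pot_v q r)) z at_top (\<lambda>n. z powi n) 1 0 Y) n))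
      = ((z*Ep) / m11 (z*Em, 0, 0, (z - inverse z)*Dm)) * (1 / Lim at_bot (\<lambda>n. z powi n * fst (jost_psibar (sysQ q r) z n)))"
    by (rule XF_fst[where Ma="sysQ q r" and Mb="sysU (pot_u q r) (pot_v q r)" and G="GU z" and H="HU z" and \<sigma>="\<lambda>n. z powi n" and \<sigma>'="\<lambda>n. z powi n" and z=z and F=at_top and F'=at_bot,
        OF P(1) P(2) GU_gauge[OF z(1)] GU_inv[OF z(1) zi] GU_lim(1,3)[OF z(1) zi] _ _ _ GU_lim(2)[OF z(1) zi] _ C L])
       (use lims(5-8) z(1) zi in \<open>simp_all add: mapp_def sm_def divide_inverse\<close>)
  have k: "(z*Ep) / m11 (z*Em, 0, 0, (z - inverse z)*Dm) = Ep / Em" using zi z(1) by simp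
  show ?thesis unfolding transbar_l_def jost_psibar_JP k[symmetric] by (rule X[unfolded jost_psibar_JP])
qed

lemma rel_U_br:
  assumes z: "z \<noteq> 0" "cmod z > 1"
  shows "transbar_r (sysU (pot_u q r) (pot_v q r)) z = (Dm / Dp) * transbar_r (sysQ q r) z"
proof -
  have z': "cmod z \<ge> 1" using z by simp
  have zi: "z - inverse z \<noteq> 0" using zz[OF z(1)] z by auto
  note P = qphib[OF z(1) z']
  obtain L where L: "((\<lambda>n. z powi (-n) * snd (jost_phibar (sysQ q r) z n)) \<longlongrightarrow> L) at_top" using P(4) by blast
  obtain C where C: "eventually (\<lambda>n. cmod (z powi (-n) * fst (jost_phibar (sysQ q r) z n)) \<le> C) at_top" using P(3) by blast
  have X: "1 / Lim at_top (\<lambda>n. z powi (-n) * snd ((THE Y. JP (sysU (pot_u q r) (pot_v q r)) z at_bot (\<lambda>n. z powi (-n)) 0 1 Y) n))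
      = (((z - inverse z)*Dm) / m22 (z*Ep, 0, 0, (z - inverse z)*Dp)) * (1 / Lim at_top (\<lambda>n. z powi (-n) * snd (jost_phibar (sysQ q r) z n)))"
    by (rule XF_snd[where Ma="sysQ q r" and Mb="sysU (pot_u q r) (pot_v q r)" and G="GU z" and H="HU z" and \<sigma>="\<lambda>n. z powi (-n)" and \<sigma>'="\<lambda>n. z powi (-n)" and z=z and F=at_bot and F'=at_top,
        OF P(1) P(2) GU_gauge[OF z(1)] GU_inv[OF z(1) zi] GU_lim(2,4)[OF z(1) zi] _ _ _ GU_lim(1)[OF z(1) zi] _ C L])
       (use lims(5-8) z(1) zi in \<open>simp_all add: mapp_def sm_def divide_inverse\<close>)
  have k: "((z - inverse z)*Dm) / m22 (z*Ep, 0, 0, (z - inverse z)*Dp) = Dm / Dp" using zi z(1) by simp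
  show ?thesis unfolding transbar_r_def jost_phibar_JP k[symmetric] by (rule X[unfolded jost_phibar_JP])
qed

lemma rel_P_bl:
  assumes z: "z \<noteq> 0" "cmod z > 1"
  shows "transbar_l (sysU (pot_p q r) (pot_s q r)) z = (Ep / Em) * transbar_l (sysQ q r) z"
proof -
  have z': "cmod z \<ge> 1" using z by simp
  have zi: "z - inverse z \<noteq> 0" using zz[OF z(1)] z by auto
  note P = qpsib[OF z(1) z']
  obtain L where L: "((\<lambda>n. z powi n * fst (jost_psibar (sysQ q r) z n)) \<longlongrightarrow> L) at_bot" using P(4) by blast
  obtain C where C: "eventually (\<lambda>n. cmod (z powi n * snd (jost_psibar (sysQ q r) z n)) \<le> C) at_bot" using P(3) by blast
  have X: "1 / Lim at_bot (\<lambda>n. z powi n * fst ((THE Y. JP (sysU (pot_p q r) (pot_s q r)) z at_top (\<lambda>n. z powi n) 1 0 Y) n))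
      = (Ep / m11 (Em, 0, 0, Dm)) * (1 / Lim at_bot (\<lambda>n. z powi n * fst (jost_psibar (sysQ q r) z n)))"
    by (rule XF_fst[where Ma="sysQ q r" and Mb="sysU (pot_p q r) (pot_s q r)" and G="GP" and H="HP" and \<sigma>="\<lambda>n. z powi n" and \<sigma>'="\<lambda>n. z powi n" and z=z and F=at_top and F'=at_bot,
        OF P(1) P(2) GP_gauge[OF z(1)] GP_inv GP_lim(1,3) _ _ _ GP_lim(2) _ C L])
       (use lims(5-8) z(1) zi in \<open>simp_all add: mapp_def sm_def divide_inverse\<close>)
  have k: "Ep / m11 (Em, 0, 0, Dm) = Ep / Em" using zi z(1) by simp
  show ?thesis unfolding transbar_l_def jost_psibar_JP k[symmetric] by (rule X[unfolded jost_psibar_JP])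
qed

lemma rel_P_br:
  assumes z: "z \<noteq> 0" "cmod z > 1"
  shows "transbar_r (sysU (pot_p q r) (pot_s q r)) z = (Dm / Dp) * transbar_r (sysQ q r) z"
proof -
  have z': "cmod z \<ge> 1" using z by simp
  have zi: "z - inverse z \<noteq> 0" using zz[OF z(1)] z by auto
  note P = qphib[OF z(1) z']
  obtain L where L: "((\<lambda>n. z powi (-n) * snd (jost_phibar (sysQ q r) z n)) \<longlongrightarrow> L) at_top" using P(4) by blast
  obtain C where C: "eventually (\<lambda>n. cmod (z powi (-n) * fst (jost_phibar (sysQ q r) z n)) \<le> C) at_top" using P(3) by blast
  have X: "1 / Lim at_top (\<lambda>n. z powi (-n) * snd ((THE Y. JP (sysU (pot_p q r) (pot_s q r)) z at_bot (\<lambda>n. z powi (-n)) 0 1 Y) n))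
      = (Dm / m22 (Ep, 0, 0, Dp)) * (1 / Lim at_top (\<lambda>n. z powi (-n) * snd (jost_phibar (sysQ q r) z n)))"
    by (rule XF_snd[where Ma="sysQ q r" and Mb="sysU (pot_p q r) (pot_s q r)" and G="GP" and H="HP" and \<sigma>="\<lambda>n. z powi (-n)" and \<sigma>'="\<lambda>n. z powi (-n)" and z=z and F=at_bot and F'=at_top,
        OF P(1) P(2) GP_gauge[OF z(1)] GP_inv GP_lim(2,4) _ _ _ GP_lim(1) _ C L])
       (use lims(5-8) z(1) zi in \<open>simp_all add: mapp_def sm_def divide_inverse\<close>)
  have k: "Dm / m22 (Ep, 0, 0, Dp) = Dm / Dp" using zi z(1) by simp
  show ?thesis unfolding transbar_r_def jost_phibar_JP k[symmetric] by (rule X[unfolded jost_phibar_JP])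
qed

end

lemma pole_rel:
  fixes F T :: "complex \<Rightarrow> complex"
  assumes "open S" "z0 \<in> S" "\<And>z. z \<in> S \<Longrightarrow> F z = \<kappa> * T z" "\<kappa> \<noteq> 0"
  shows "(is_pole F z0 \<longleftrightarrow> is_pole T z0) \<and> (is_pole T z0 \<longrightarrow> zorder F z0 = zorder T z0)"
proof -
  have ev: "eventually (\<lambda>z. F z = \<kappa> * T z) (at z0)"
    using eventually_at_in_open'[OF assms(1,2)] by eventually_elim (rule assms(3))
  have "is_pole F z0 \<longleftrightarrow> is_pole (\<lambda>z. \<kappa> * T z) z0" by (rule is_pole_cong[OF ev refl])
  also have "\<dots> \<longleftrightarrow> is_pole T z0" using assms(4) by simp
  finally have 1: "is_pole F z0 \<longleftrightarrow> is_pole T z0" .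
  have "zorder F z0 = zorder (\<lambda>z. \<kappa> * T z) z0" by (rule zorder_cong[OF ev refl])
  also have "\<dots> = zorder T z0" by (rule zorder_cmult[OF assms(4)])
  finally show ?thesis using 1 by simp
qed

theorem corollary3p5:
  fixes q r :: "int \<Rightarrow> complex"
  assumes "rapid_decay q" and "rapid_decay r"
    and "\<And>n. 1 - q n * r n \<noteq> 0"
    and "\<And>n. 1 + q n * r (n+1) \<noteq> 0"
  defines "T \<equiv> trans_l (sysQ q r)"
    and "Tul \<equiv> trans_l (sysU (pot_u q r) (pot_v q r))"
    and "Tur \<equiv> trans_r (sysU (pot_u q r) (pot_v q r))"
    and "Tpl \<equiv> trans_l (sysU (pot_p q r) (pot_s q r))"
    and "Tpr \<equiv> trans_r (sysU (pot_p q r) (pot_s q r))"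
    and "Tb \<equiv> transbar_l (sysQ q r)"
    and "Tbul \<equiv> transbar_l (sysU (pot_u q r) (pot_v q r))"
    and "Tbur \<equiv> transbar_r (sysU (pot_u q r) (pot_v q r))"
    and "Tbpl \<equiv> transbar_l (sysU (pot_p q r) (pot_s q r))"
    and "Tbpr \<equiv> transbar_r (sysU (pot_p q r) (pot_s q r))"
  shows "(\<forall>z0. 0 < norm z0 \<and> norm z0 < 1 \<longrightarrow>
           (\<forall>F\<in>{Tul, Tur, Tpl, Tpr}. (is_pole F z0 \<longleftrightarrow> is_pole T z0) \<and>
              (is_pole T z0 \<longrightarrow> zorder F z0 = zorder T z0))) \<and>
         (\<forall>z0. 1 < norm z0 \<longrightarrow>
           (\<forall>F\<in>{Tbul, Tbur, Tbpl, Tbpr}. (is_pole F z0 \<longleftrightarrow> is_pole Tb z0) \<and>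
              (is_pole Tb z0 \<longrightarrow> zorder F z0 = zorder Tb z0)))"
proof -
  interpret QR q r using assms(1-4) by unfold_locales auto
  define S1 where "S1 = ball (0::complex) 1 - {0}"
  define S2 where "S2 = - cball (0::complex) 1"
  have o1: "open S1" unfolding S1_def by (intro open_Diff open_ball) auto
  have o2: "open S2" unfolding S2_def by (intro open_Compl closed_cball)
  have m1: "z \<in> S1 \<longleftrightarrow> 0 < norm z \<and> norm z < 1" for z unfolding S1_def by auto
  have m2: "z \<in> S2 \<longleftrightarrow> 1 < norm z" for z unfolding S2_def by auto
  have k: "Dp / Dm \<noteq> 0" "Em / Ep \<noteq> 0" "Ep / Em \<noteq> 0" "Dm / Dp \<noteq> 0" using lims(5-8) by auto
  have r1: "Tul z = (Dp / Dm) * T z" "Tur z = (Em / Ep) * T z" "Tpl z = (Dp / Dm) * T z" "Tpr z = (Em / Ep) * T z"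
    if "z \<in> S1" for z
  proof -
    have z: "z \<noteq> 0" "cmod z < 1" using that m1 by auto
    have w: "trans_r (sysQ q r) z = T z" unfolding T_def using wronskian[OF z(1)] z(2) by simp
    show "Tul z = (Dp / Dm) * T z" unfolding Tul_def T_def by (rule rel_U_l[OF z])
    show "Tur z = (Em / Ep) * T z" unfolding Tur_def w[symmetric] by (rule rel_U_r[OF z])
    show "Tpl z = (Dp / Dm) * T z" unfolding Tpl_def T_def by (rule rel_P_l[OF z])
    show "Tpr z = (Em / Ep) * T z" unfolding Tpr_def w[symmetric] by (rule rel_P_r[OF z])
  qed
  have r2: "Tbul z = (Ep / Em) * Tb z" "Tbur z = (Dm / Dp) * Tb z" "Tbpl z = (Ep / Em) * Tb z" "Tbpr z = (Dm / Dp) * Tb z"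
    if "z \<in> S2" for z
  proof -
    have z: "z \<noteq> 0" "cmod z > 1" using that m2 by auto
    have w: "transbar_r (sysQ q r) z = Tb z" unfolding Tb_def using wronskian_bar[OF z(1)] z(2) by simp
    show "Tbul z = (Ep / Em) * Tb z" unfolding Tbul_def Tb_def by (rule rel_U_bl[OF z])
    show "Tbur z = (Dm / Dp) * Tb z" unfolding Tbur_def w[symmetric] by (rule rel_U_br[OF z])
    show "Tbpl z = (Ep / Em) * Tb z" unfolding Tbpl_def Tb_def by (rule rel_P_bl[OF z])
    show "Tbpr z = (Dm / Dp) * Tb z" unfolding Tbpr_def w[symmetric] by (rule rel_P_br[OF z])
  qed
  have A: "(\<forall>F\<in>{Tul, Tur, Tpl, Tpr}. (is_pole F z0 \<longleftrightarrow> is_pole T z0) \<and>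
              (is_pole T z0 \<longrightarrow> zorder F z0 = zorder T z0))" if "0 < norm z0 \<and> norm z0 < 1" for z0
  proof -
    have z0: "z0 \<in> S1" using that m1 by auto
    show ?thesis
      using pole_rel[OF o1 z0 r1(1) k(1)] pole_rel[OF o1 z0 r1(2) k(2)]
            pole_rel[OF o1 z0 r1(3) k(1)] pole_rel[OF o1 z0 r1(4) k(2)] by auto
  qed
  have B: "(\<forall>F\<in>{Tbul, Tbur, Tbpl, Tbpr}. (is_pole F z0 \<longleftrightarrow> is_pole Tb z0) \<and>
              (is_pole Tb z0 \<longrightarrow> zorder F z0 = zorder Tb z0))" if "1 < norm z0" for z0
  proof -
    have z0: "z0 \<in> S2" using that m2 by auto
    show ?thesis
      using pole_rel[OF o2 z0 r2(1) k(3)] pole_rel[OF o2 z0 r2(2) k(4)]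
            pole_rel[OF o2 z0 r2(3) k(3)] pole_rel[OF o2 z0 r2(4) k(4)] by auto
  qed
  show ?thesis using A B by blast
qed

end
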